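(* Let $\kappa\ge2$, $\alpha,\beta\in\mathbb{R}$ and $\Sigma_\lambda\in\mathscr{M}_\kappa^+$. Then there exists a unique global solution $\{\mathsf{V}_t\}_{t\ge0}$ to the matrix ODE $\frac{d}{dt}\mathsf{V}_t=\mathsf{F}(\mathsf{V}_t)$, $\mathsf{V}_0=\Sigma_\lambda$, and $\mathsf{V}_t\in\mathscr{M}_\kappa^+$ for all $t\in[0,\infty)$.
   Context: Matrices are indexed by $\{0,\dots,\kappa\}$. $\mathsf{M}_\kappa(a,b,c)$ has $(i,j)$ entry $a$ if $i=j$, $b$ if $i\ne j$ and ($i=0$ or $j=0$), $c$ otherwise; $\mathscr{M}_\kappa=\{\mathsf{M}_\kappa(a,b,c):(a,b,c)\in\mathbb{R}^3\}$ and $\mathscr{M}_\kappa^+$ its positive definite elements. $\mathsf{I}$ is the identity, $\mathsf{Q}$ has $\mathsf{Q}_{00}=1$ and other entries $0$, $\mathsf{P}$ has $\mathsf{P}_{0j}=1$ for $j\ne0$ and other entries $0$. With $f(a,b,c)=\frac{b(a-c)}{a^2-b^2}$, $g(a,b,c)=\frac{ac-b^2}{a^2-b^2}$, for $\mathsf{A}=\mathsf{M}_\kappa(a,b,c)$ set $\tilde\alpha(\mathsf{A})=\alpha+\frac{\beta(\kappa-1)}{\kappa}f(a,b,c)$, $\tilde\beta(\mathsf{A})=\frac\beta\kappa+\frac{\beta(\kappa-1)}{\kappa}g(a,b,c)$ if $|a|\ne|b|$ and both $0$ otherwise; $\mathsf{L}(\mathsf{A})=\alpha\mathsf{Q}+\tilde\alpha(\mathsf{A})(\mathsf{I}-\mathsf{Q})+\frac\beta\kappa\mathsf{P}+\tilde\beta(\mathsf{A})\mathsf{P}^*$;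 $\mathsf{F}(\mathsf{A})=2\mathsf{I}-\mathsf{L}(\mathsf{A})\mathsf{A}-\mathsf{A}\mathsf{L}(\mathsf{A})^*$. *)

theory Defs
  imports "HOL-Analysis.Analysis"
begin

text \<open>Matrices indexed by {0..kappa} are represented as functions nat => nat => real;
  only entries with both indices in {0..kappa} are meaningful.\<close>

type_synonym rmat = "nat \<Rightarrow> nat \<Rightarrow> real"

definition matM :: "nat \<Rightarrow> real \<Rightarrow> real \<Rightarrow> real \<Rightarrow> rmat" where
  "matM \<kappa> a b c = (\<lambda>i j. if i = j then a else if i = 0 \<or> j = 0 then b else c)"

definition mat_eq_on :: "nat \<Rightarrow> rmat \<Rightarrow> rmat \<Rightarrow> bool" where
  "mat_eq_on \<kappa> A B \<longleftrightarrow> (\<forall>i\<le>\<kappa>. \<forall>j\<le>\<kappa>. A i j = B i j)"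

definition in_scrM :: "nat \<Rightarrow> rmat \<Rightarrow> bool" where
  "in_scrM \<kappa> A \<longleftrightarrow> (\<exists>a b c. mat_eq_on \<kappa> A (matM \<kappa> a b c))"

definition pos_def :: "nat \<Rightarrow> rmat \<Rightarrow> bool" where
  "pos_def \<kappa> A \<longleftrightarrow> (\<forall>i\<le>\<kappa>. \<forall>j\<le>\<kappa>. A i j = A j i) \<and>
     (\<forall>x::nat \<Rightarrow> real. (\<exists>i\<le>\<kappa>. x i \<noteq> 0) \<longrightarrow>
        (\<Sum>i\<le>\<kappa>. \<Sum>j\<le>\<kappa>. x i * A i j * x j) > 0)"

definition in_scrM_pos :: "nat \<Rightarrow> rmat \<Rightarrow> bool" where
  "in_scrM_pos \<kappa> A \<longleftrightarrow> in_scrM \<kappa> A \<and> pos_def \<kappa> A"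

definition matI :: rmat where "matI = (\<lambda>i j. if i = j then 1 else 0)"
definition matQ :: rmat where "matQ = (\<lambda>i j. if i = 0 \<and> j = 0 then 1 else 0)"
definition matP :: rmat where "matP = (\<lambda>i j. if i = 0 \<and> j \<noteq> 0 then 1 else 0)"

definition mat_tr :: "rmat \<Rightarrow> rmat" where "mat_tr A = (\<lambda>i j. A j i)"

definition mat_mult :: "nat \<Rightarrow> rmat \<Rightarrow> rmat \<Rightarrow> rmat" where
  "mat_mult \<kappa> A B = (\<lambda>i j. \<Sum>k\<le>\<kappa>. A i k * B k j)"

definition ff :: "real \<Rightarrow> real \<Rightarrow> real \<Rightarrow> real" where
  "ff a b c = b * (a - c) / (a\<^sup>2 - b\<^sup>2)"

definition gg :: "real \<Rightarrow> real \<Rightarrow> real \<Rightarrow> real" where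
  "gg a b c = (a * c - b\<^sup>2) / (a\<^sup>2 - b\<^sup>2)"

text \<open>For A = M(a,b,c) with kappa >= 2 the parameters are recovered as
  a = A 0 0, b = A 0 1, c = A 1 2.\<close>

definition alpha_t :: "nat \<Rightarrow> real \<Rightarrow> real \<Rightarrow> rmat \<Rightarrow> real" where
  "alpha_t \<kappa> \<alpha> \<beta> A = (let a = A 0 0; b = A 0 1; c = A 1 2 in
     if \<bar>a\<bar> \<noteq> \<bar>b\<bar> then \<alpha> + \<beta> * (real \<kappa> - 1) / real \<kappa> * ff a b c else 0)"

definition beta_t :: "nat \<Rightarrow> real \<Rightarrow> real \<Rightarrow> rmat \<Rightarrow> real" where
  "beta_t \<kappa> \<alpha> \<beta> A = (let a = A 0 0; b = A 0 1; c = A 1 2 in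
     if \<bar>a\<bar> \<noteq> \<bar>b\<bar> then \<beta> / real \<kappa> + \<beta> * (real \<kappa> - 1) / real \<kappa> * gg a b c else 0)"

definition matL :: "nat \<Rightarrow> real \<Rightarrow> real \<Rightarrow> rmat \<Rightarrow> rmat" where
  "matL \<kappa> \<alpha> \<beta> A = (\<lambda>i j. \<alpha> * matQ i j + alpha_t \<kappa> \<alpha> \<beta> A * (matI i j - matQ i j)
     + \<beta> / real \<kappa> * matP i j + beta_t \<kappa> \<alpha> \<beta> A * mat_tr matP i j)"

definition matF :: "nat \<Rightarrow> real \<Rightarrow> real \<Rightarrow> rmat \<Rightarrow> rmat" where
  "matF \<kappa> \<alpha> \<beta> A = (\<lambda>i j. 2 * matI i j - mat_mult \<kappa> (matL \<kappa> \<alpha> \<beta> A) A i j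
     - mat_mult \<kappa> A (mat_tr (matL \<kappa> \<alpha> \<beta> A)) i j)"

definition is_global_solution :: "nat \<Rightarrow> real \<Rightarrow> real \<Rightarrow> rmat \<Rightarrow> (real \<Rightarrow> rmat) \<Rightarrow> bool" where
  "is_global_solution \<kappa> \<alpha> \<beta> S V \<longleftrightarrow>
     (\<forall>t\<ge>0. in_scrM \<kappa> (V t)) \<and> mat_eq_on \<kappa> (V 0) S \<and>
     (\<forall>t\<ge>0. \<forall>i\<le>\<kappa>. \<forall>j\<le>\<kappa>.
        ((\<lambda>s. V s i j) has_real_derivative matF \<kappa> \<alpha> \<beta> (V t) i j) (at t within {0..}))"

end

theory Submission
  imports Defs
begin

lemma picard_global:
  fixes H :: "'a::euclidean_space \<Rightarrow> 'a"
  assumes Lip: "\<And>p q. norm (H p - H q) \<le> L * norm (p - q)"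
    and Bd: "\<And>p. norm (H p) \<le> M" and L0: "L > 0"
  shows "\<exists>u. u 0 = u0 \<and> (\<forall>t\<ge>0. (u has_vector_derivative H (u t)) (at t within {0..}))"
proof -
  have contH: "continuous_on S H" for S
    by (rule lipschitz_on_continuous_on[of L]) (auto intro!: lipschitz_onI simp: dist_norm Lip less_imp_le[OF L0])
  have M0: "M \<ge> 0" using Bd[of 0] norm_ge_zero order_trans by blast
  define P where "P = (\<lambda>(v::real \<Rightarrow> 'a) t. u0 + integral {0..t} (\<lambda>s. H (v s)))"
  define it where "it k = (P ^^ k) (\<lambda>t. u0)" for k
  have itS: "it (Suc k) t = u0 + integral {0..t} (\<lambda>s. H (it k s))" for k t
    by (simp add: it_def P_def)
  have it0: "it 0 = (\<lambda>t. u0)" by (simp add: it_def)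
  have cont_int: "continuous_on {0..T} (\<lambda>t. integral {0..t} g)" if "continuous_on {0..T} g" for T and g :: "real \<Rightarrow> 'a"
    by (rule continuous_on_vector_derivative[OF integral_has_vector_derivative[OF that]])
  have itc: "continuous_on {0..T} (it k)" for k T
  proof (induction k)
    case 0 then show ?case by (simp add: it0)
  next
    case (Suc k)
    have "continuous_on {0..T} (\<lambda>s. H (it k s))"
      using continuous_on_compose[OF Suc contH] by (simp add: o_def)
    then show ?case unfolding itS by (intro continuous_intros cont_int)
  qed
  have Hitc: "continuous_on {0..T} (\<lambda>s. H (it k s))" for k T
    using continuous_on_compose[OF itc contH] by (simp add: o_def)
  have intg: "(\<lambda>s. H (it k s)) integrable_on {0..T}" for k T
    by (rule integrable_continuous_real[OF Hitc])
  define d where "d k t = it (Suc k) t - it k t" for k t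
  have dbound: "norm (d k t) \<le> M * L ^ k * t ^ Suc k / fact (Suc k)" if "t \<ge> 0" for k t
    using that
  proof (induction k arbitrary: t)
    case 0
    have "d 0 t = integral {0..t} (\<lambda>s. H u0)" by (simp add: d_def itS it0)
    also have "\<dots> = t *\<^sub>R H u0" using 0 by simp
    finally have "d 0 t = t *\<^sub>R H u0" .
    then have "norm (d 0 t) = t * norm (H u0)" using 0 by simp
    also have "\<dots> \<le> t * M" using 0 Bd[of u0] by (simp add: mult_left_mono)
    finally show ?case by (simp add: mult.commute)
  next
    case (Suc k)
    have "d (Suc k) t = integral {0..t} (\<lambda>s. H (it (Suc k) s) - H (it k s))"
      unfolding d_def itS[of "Suc k" t] itS[of k t] by (simp add: integral_diff[OF intg intg])
    also have "norm \<dots> \<le> integral {0..t} (\<lambda>s. L * (M * L ^ k * s ^ Suc k / fact (Suc k)))"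
    proof (rule integral_norm_bound_integral)
      show "(\<lambda>s. H (it (Suc k) s) - H (it k s)) integrable_on {0..t}"
        by (intro integrable_diff intg)
      show "(\<lambda>s. L * (M * L ^ k * s ^ Suc k / fact (Suc k))) integrable_on {0..t}"
        by (intro integrable_continuous_real continuous_intros) (auto simp del: fact_Suc)
      fix s assume s: "s \<in> {0..t}"
      have "norm (H (it (Suc k) s) - H (it k s)) \<le> L * norm (d k s)"
        using Lip by (simp add: d_def)
      also have "\<dots> \<le> L * (M * L ^ k * s ^ Suc k / fact (Suc k))"
        using Suc.IH[of s] s L0 by (intro mult_left_mono) auto
      finally show "norm (H (it (Suc k) s) - H (it k s)) \<le> L * (M * L ^ k * s ^ Suc k / fact (Suc k))" .
    qed
    also have "\<dots> = M * L ^ Suc k * t ^ Suc (Suc k) / fact (Suc (Suc k))"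
    proof -
      have "((\<lambda>s. L * (M * L ^ k * s ^ Suc k / fact (Suc k))) has_integral
          ((\<lambda>s. M * L ^ Suc k * s ^ Suc (Suc k) / fact (Suc (Suc k))) t - (\<lambda>s. M * L ^ Suc k * s ^ Suc (Suc k) / fact (Suc (Suc k))) 0)) {0..t}"
      proof (rule fundamental_theorem_of_calculus)
        show "0 \<le> t" using Suc by simp
        fix x assume "x \<in> {0..t}"
        show "((\<lambda>s. M * L ^ Suc k * s ^ Suc (Suc k) / fact (Suc (Suc k))) has_vector_derivative
           L * (M * L ^ k * x ^ Suc k / fact (Suc k))) (at x within {0..t})"
          unfolding has_real_derivative_iff_has_vector_derivative[symmetric]
          by (rule derivative_eq_intros refl | simp)+
      qed
      from integral_unique[OF this] show ?thesis by simp
    qed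
    finally show ?case .
  qed
  define u where "u t = u0 + (\<Sum>i. d i t)" for t
  have itsum: "it n t = u0 + (\<Sum>i<n. d i t)" for n t
    using sum_lessThan_telescope[of "\<lambda>k. it k t" n] by (simp add: d_def it0)
  have ul: "uniform_limit {0..T} it u sequentially" if T0: "T \<ge> 0" for T
  proof -
    have W: "uniform_limit {0..T} (\<lambda>n t. \<Sum>i<n. d i t) (\<lambda>t. \<Sum>i. d i t) sequentially"
    proof (rule Weierstrass_m_test)
      fix k t assume t: "t \<in> {0..T}"
      have "norm (d k t) \<le> M * L ^ k * t ^ Suc k / fact (Suc k)" using dbound[of t k] t by simp
      also have "\<dots> \<le> M * L ^ k * T ^ Suc k / fact k"
      proof (rule frac_le)
        show "0 \<le> M * L ^ k * T ^ Suc k" using M0 L0 T0 by simp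
        show "M * L ^ k * t ^ Suc k \<le> M * L ^ k * T ^ Suc k"
          using M0 L0 t by (intro mult_left_mono power_mono) auto
        show "0 < (fact k :: real)" by simp
        show "(fact k :: real) \<le> fact (Suc k)" by (rule fact_mono) simp
      qed
      also have "\<dots> = M * T * (inverse (fact k) * (L * T) ^ k)"
        by (simp add: field_simps power_mult_distrib)
      finally show "norm (d k t) \<le> M * T * (inverse (fact k) * (L * T) ^ k)" .
    next
      show "summable (\<lambda>k. M * T * (inverse (fact k) * (L * T) ^ k))"
        by (intro summable_mult summable_exp)
    qed
    have "uniform_limit {0..T} (\<lambda>n t. u0 + (\<Sum>i<n. d i t)) (\<lambda>t. u0 + (\<Sum>i. d i t)) sequentially"
      by (intro uniform_limit_add[OF uniform_limit_const W])
    then show ?thesis by (simp add: itsum[abs_def] u_def[abs_def])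
  qed
  have uc: "continuous_on {0..T} u" if "T \<ge> 0" for T
    by (rule uniform_limit_theorem[OF _ ul[OF that]]) (auto intro: always_eventually itc)
  have Huc: "continuous_on {0..T} (\<lambda>s. H (u s))" if "T \<ge> 0" for T
    using continuous_on_compose[OF uc[OF that] contH] by (simp add: o_def)
  have ulH: "uniform_limit {0..T} (\<lambda>n s. H (it n s)) (\<lambda>s. H (u s)) sequentially" if T0: "T \<ge> 0" for T
    unfolding uniform_limit_sequentially_iff
  proof (intro allI impI)
    fix e :: real assume e: "e > 0"
    then obtain N where N: "\<forall>n\<ge>N. \<forall>x\<in>{0..T}. dist (it n x) (u x) < e / L"
      using ul[OF T0] L0 unfolding uniform_limit_sequentially_iff by (meson divide_pos_pos)
    show "\<exists>N. \<forall>n\<ge>N. \<forall>x\<in>{0..T}. dist (H (it n x)) (H (u x)) < e"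
    proof (intro exI allI impI ballI)
      fix n x assume "N \<le> n" "x \<in> {0..T}"
      then have "dist (it n x) (u x) < e / L" using N by blast
      then have "L * dist (it n x) (u x) < e" using L0 by (simp add: field_simps)
      moreover have "dist (H (it n x)) (H (u x)) \<le> L * dist (it n x) (u x)"
        using Lip by (simp add: dist_norm)
      ultimately show "dist (H (it n x)) (H (u x)) < e" by linarith
    qed
  qed
  have ueq: "u t = u0 + integral {0..t} (\<lambda>s. H (u s))" if t0: "t \<ge> 0" for t
  proof -
    obtain I J where I: "\<And>n. ((\<lambda>s. H (it n s)) has_integral I n) {0..t}"
      and J: "((\<lambda>s. H (u s)) has_integral J) {0..t}" and IJ: "I \<longlonglongrightarrow> J"
      using uniform_limit_integral[OF ulH[OF t0] Hitc] by auto
    have "(\<lambda>n. it (Suc n) t) \<longlonglongrightarrow> u0 + J"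
    proof -
      have "integral {0..t} (\<lambda>s. H (it n s)) = I n" for n using I[of n] by (rule integral_unique)
      then show ?thesis using IJ by (simp add: itS tendsto_add)
    qed
    moreover have "(\<lambda>n. it (Suc n) t) \<longlonglongrightarrow> u t"
      using LIMSEQ_Suc[OF tendsto_uniform_limitI[OF ul[OF t0], of t]] t0 by simp
    ultimately have "u t = u0 + J" using LIMSEQ_unique by blast
    then show ?thesis using J by (simp add: integral_unique)
  qed
  have "u 0 = u0" using ueq[of 0] by simp
  moreover have "(u has_vector_derivative H (u t)) (at t within {0..})" if t0: "t \<ge> 0" for t
  proof -
    have T: "t + 1 \<ge> 0" using t0 by simp
    have "((\<lambda>s. integral {0..s} (\<lambda>s. H (u s))) has_vector_derivative H (u t)) (at t within {0..t+1})"
      using integral_has_vector_derivative[OF Huc[OF T], of t] t0 by simp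
    then have "((\<lambda>s. u0 + integral {0..s} (\<lambda>s. H (u s))) has_vector_derivative H (u t)) (at t within {0..t+1})"
      by (intro derivative_eq_intros) auto
    then have "(u has_vector_derivative H (u t)) (at t within {0..t+1})"
      by (rule has_vector_derivative_transform[rotated 2]) (use t0 ueq in auto)
    moreover have "at t within {0..t+1} = at t within {0..}"
      by (rule at_within_nhd[of t "{..<t+1}"]) auto
    ultimately show ?thesis by simp
  qed
  ultimately show ?thesis by blast
qed

lemma stay_pos:
  fixes \<phi> \<phi>' :: "real \<Rightarrow> real"
  assumes D: "\<And>t. t \<ge> 0 \<Longrightarrow> (\<phi> has_real_derivative \<phi>' t) (at t within {0..})"
    and P0: "\<phi> 0 > 0" and Z: "\<And>t. t > 0 \<Longrightarrow> \<phi> t = 0 \<Longrightarrow> \<phi>' t > 0"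
    and t2: "t2 \<ge> 0"
  shows "\<phi> t2 > 0"
proof (rule ccontr)
  assume "\<not> \<phi> t2 > 0"
  then have n2: "\<phi> t2 \<le> 0" by simp
  have cont: "continuous_on {0..} \<phi>"
    using D by (intro continuous_on_vector_derivative[of _ _ \<phi>'])
      (auto simp: has_real_derivative_iff_has_vector_derivative)
  have contI: "continuous_on {a..b} \<phi>" if "a \<ge> 0" for a b
    by (rule continuous_on_subset[OF cont]) (use that in auto)
  define S where "S = {s \<in> {0..t2}. \<phi> s = 0}"
  have Sne: "S \<noteq> {}"
    using IVT2'[of \<phi> t2 0 0, OF n2 _ t2 contI] P0 unfolding S_def by force
  have Scl: "closed S" unfolding S_def
    by (rule continuous_closed_preimage_constant[OF contI]) auto
  have Sbd: "bdd_below S" unfolding S_def by (auto intro: bdd_belowI[of _ 0])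
  define t1 where "t1 = Inf S"
  have t1S: "t1 \<in> S" unfolding t1_def by (rule closed_contains_Inf[OF Sne Sbd Scl])
  then have t1: "\<phi> t1 = 0" "0 \<le> t1" "t1 \<le> t2" unfolding S_def by auto
  have t1p: "t1 > 0" using t1 P0 by (cases "t1 = 0") auto
  have below: "\<phi> s > 0" if s: "0 \<le> s" "s < t1" for s
  proof (rule ccontr)
    assume "\<not> \<phi> s > 0"
    then obtain x where x: "0 \<le> x" "x \<le> s" "\<phi> x = 0"
      using IVT2'[of \<phi> s 0 0, OF _ _ s(1) contI] P0 by force
    then have "x \<in> S" using s t1 unfolding S_def by auto
    then have "t1 \<le> x" unfolding t1_def by (rule cInf_lower[OF _ Sbd])
    then show False using x s by simp
  qed
  have "(\<phi> has_real_derivative \<phi>' t1) (at t1 within {0..})" using D t1 by simp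
  moreover have "at t1 within {0..} = at t1" 
  proof -
    have "{0..} \<inter> {0<..} - {t1} = UNIV \<inter> {0<..} - {t1}" by auto
    then show ?thesis using at_within_nhd[of t1 "{0<..}" "{0..}" UNIV] t1p by auto
  qed
  ultimately have "DERIV \<phi> t1 :> \<phi>' t1" by simp
  then obtain d where d: "d > 0" "\<And>h. h > 0 \<Longrightarrow> h < d \<Longrightarrow> \<phi> (t1 - h) < \<phi> t1"
    using DERIV_pos_inc_left Z[OF t1p t1(1)] by blast
  define h where "h = min (d/2) (t1/2)"
  have "\<phi> (t1 - h) < 0" using d(2)[of h] d(1) t1p t1(1) by (simp add: h_def)
  moreover have "\<phi> (t1 - h) > 0" using below[of "t1 - h"] t1p d(1) by (simp add: h_def)
  ultimately show False by simp
qed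

type_synonym r3 = "real \<times> real \<times> real"

definition dd :: "r3 \<Rightarrow> r3 \<Rightarrow> real" where
  "dd p q = \<bar>fst p - fst q\<bar> + \<bar>fst (snd p) - fst (snd q)\<bar> + \<bar>snd (snd p) - snd (snd q)\<bar>"

definition LIP :: "(r3 \<Rightarrow> real) \<Rightarrow> bool" where
  "LIP f \<longleftrightarrow> (\<exists>C. \<forall>p q. \<bar>f p - f q\<bar> \<le> C * dd p q)"
definition BND :: "(r3 \<Rightarrow> real) \<Rightarrow> bool" where
  "BND f \<longleftrightarrow> (\<exists>B. \<forall>p. \<bar>f p\<bar> \<le> B)"

lemma dd_nonneg: "dd p q \<ge> 0" by (simp add: dd_def)

lemma LIP_const: "LIP (\<lambda>p. c)" unfolding LIP_def by (auto intro!: exI[of _ 0])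
lemma BND_const: "BND (\<lambda>p. c)" unfolding BND_def by auto

lemma LIP_add: assumes "LIP f" "LIP g" shows "LIP (\<lambda>p. f p + g p)"
proof -
  obtain C D where C: "\<And>p q. \<bar>f p - f q\<bar> \<le> C * dd p q" and D: "\<And>p q. \<bar>g p - g q\<bar> \<le> D * dd p q"
    using assms unfolding LIP_def by blast
  have "\<bar>f p + g p - (f q + g q)\<bar> \<le> (C + D) * dd p q" for p q
    using C[of p q] D[of p q] by (simp add: distrib_right abs_le_iff)
  then show ?thesis unfolding LIP_def by blast
qed

lemma LIP_diff: assumes "LIP f" "LIP g" shows "LIP (\<lambda>p. f p - g p)"
proof -
  obtain C D where C: "\<And>p q. \<bar>f p - f q\<bar> \<le> C * dd p q" and D: "\<And>p q. \<bar>g p - g q\<bar> \<le> D * dd p q"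
    using assms unfolding LIP_def by blast
  have "\<bar>f p - g p - (f q - g q)\<bar> \<le> (C + D) * dd p q" for p q
    using C[of p q] D[of p q] by (simp add: distrib_right abs_le_iff)
  then show ?thesis unfolding LIP_def by blast
qed

lemma BND_add: assumes "BND f" "BND g" shows "BND (\<lambda>p. f p + g p)"
proof -
  obtain C D where C: "\<And>p. \<bar>f p\<bar> \<le> C" and D: "\<And>p. \<bar>g p\<bar> \<le> D"
    using assms unfolding BND_def by blast
  have "\<bar>f p + g p\<bar> \<le> C + D" for p using C[of p] D[of p] by (simp add: abs_le_iff)
  then show ?thesis unfolding BND_def by blast
qed

lemma BND_diff: assumes "BND f" "BND g" shows "BND (\<lambda>p. f p - g p)"
proof -
  obtain C D where C: "\<And>p. \<bar>f p\<bar> \<le> C" and D: "\<And>p. \<bar>g p\<bar> \<le> D"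
    using assms unfolding BND_def by blast
  have "\<bar>f p - g p\<bar> \<le> C + D" for p using C[of p] D[of p] by (simp add: abs_le_iff)
  then show ?thesis unfolding BND_def by blast
qed

lemma BND_mult: assumes "BND f" "BND g" shows "BND (\<lambda>p. f p * g p)"
proof -
  obtain C D where C: "\<And>p. \<bar>f p\<bar> \<le> C" and D: "\<And>p. \<bar>g p\<bar> \<le> D"
    using assms unfolding BND_def by blast
  have "\<bar>f p * g p\<bar> \<le> C * D" for p
    unfolding abs_mult using C[of p] D[of p] by (intro mult_mono) auto
  then show ?thesis unfolding BND_def by blast
qed

lemma LIP_mult: assumes "LIP f" "LIP g" "BND f" "BND g" shows "LIP (\<lambda>p. f p * g p)"
proof -
  obtain C D where C: "\<And>p q. \<bar>f p - f q\<bar> \<le> C * dd p q" and D: "\<And>p q. \<bar>g p - g q\<bar> \<le> D * dd p q"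
    using assms unfolding LIP_def by blast
  obtain A B where A: "\<And>p. \<bar>f p\<bar> \<le> A" and B: "\<And>p. \<bar>g p\<bar> \<le> B"
    using assms unfolding BND_def by blast
  have "\<bar>f p * g p - f q * g q\<bar> \<le> (A * D + B * C) * dd p q" for p q
  proof -
    have e: "f p * g p - f q * g q = f p * (g p - g q) + g q * (f p - f q)" by (simp add: algebra_simps)
    have 1: "\<bar>f p * (g p - g q)\<bar> \<le> A * (D * dd p q)"
      unfolding abs_mult using A[of p] D[of p q] by (intro mult_mono) auto
    have 2: "\<bar>g q * (f p - f q)\<bar> \<le> B * (C * dd p q)"
      unfolding abs_mult using B[of q] C[of p q] by (intro mult_mono) auto
    have "\<bar>f p * g p - f q * g q\<bar> \<le> \<bar>f p * (g p - g q)\<bar> + \<bar>g q * (f p - f q)\<bar>"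
      unfolding e by (rule abs_triangle_ineq)
    also have "\<dots> \<le> A * (D * dd p q) + B * (C * dd p q)" using 1 2 by simp
    finally show ?thesis by (simp add: algebra_simps)
  qed
  then show ?thesis unfolding LIP_def by blast
qed

lemma exp_diff_le:
  assumes "a \<le> (b::real)" shows "exp b - exp a \<le> exp b * (b - a)"
proof -
  have "1 + (a - b) \<le> exp (a - b)" by (rule exp_ge_add_one_self)
  then have "exp b * (1 + (a - b)) \<le> exp b * exp (a - b)" by (intro mult_left_mono) auto
  also have "exp b * exp (a - b) = exp a" by (simp add: exp_add[symmetric])
  finally show ?thesis by (simp add: algebra_simps)
qed

definition clp :: "real \<Rightarrow> real \<Rightarrow> real" where "clp c v = exp (min v c)"

lemma clp_pos: "clp c v > 0" by (simp add: clp_def)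
lemma clp_le: "clp c v \<le> exp c" by (simp add: clp_def)
lemma clp_eq: "v \<le> c \<Longrightarrow> clp c v = exp v" by (simp add: clp_def)

lemma clp_lip: "\<bar>clp c p - clp c q\<bar> \<le> exp c * \<bar>p - q\<bar>"
proof -
  have gen: "\<bar>clp c p - clp c q\<bar> \<le> exp c * \<bar>p - q\<bar>" if "min p c \<le> min q c" for p q
  proof -
    have "exp (min q c) - exp (min p c) \<le> exp (min q c) * (min q c - min p c)"
      using exp_diff_le[OF that] .
    also have "\<dots> \<le> exp c * \<bar>p - q\<bar>"
    proof (rule mult_mono)
      show "min q c - min p c \<le> \<bar>p - q\<bar>" by (simp add: min_def abs_if)
    qed (use that in auto)
    finally show ?thesis using that by (simp add: clp_def abs_if)
  qed
  show ?thesis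
  proof (cases "min p c \<le> min q c")
    case True then show ?thesis using gen by blast
  next
    case False
    then have "min q c \<le> min p c" by linarith
    from gen[OF this] show ?thesis by (metis abs_minus_commute)
  qed
qed

lemma LIP_clp1: "LIP (\<lambda>p. clp c (fst p))"
  unfolding LIP_def dd_def
  by (rule exI[of _ "exp c"]) (auto intro: order_trans[OF clp_lip] mult_left_mono)
lemma LIP_clp2: "LIP (\<lambda>p. clp c (fst (snd p)))"
  unfolding LIP_def dd_def
  by (rule exI[of _ "exp c"]) (auto intro: order_trans[OF clp_lip] mult_left_mono)
lemma LIP_clp3: "LIP (\<lambda>p. clp c (snd (snd p)))"
  unfolding LIP_def dd_def
  by (rule exI[of _ "exp c"]) (auto intro: order_trans[OF clp_lip] mult_left_mono)
lemma BND_clp: "BND (\<lambda>p. clp c (f p))"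
  unfolding BND_def using clp_le clp_pos by (metis abs_of_pos)

lemma vd_fst: "(u has_vector_derivative v) F \<Longrightarrow> ((\<lambda>t. fst (u t)) has_vector_derivative fst v) F"
  unfolding has_vector_derivative_def by (drule has_derivative_fst) simp
lemma vd_snd: "(u has_vector_derivative v) F \<Longrightarrow> ((\<lambda>t. snd (u t)) has_vector_derivative snd v) F"
  unfolding has_vector_derivative_def by (drule has_derivative_snd) simp

lemma norm_fst_le': "norm (fst v) \<le> norm v" by (metis norm_fst_le prod.collapse)
lemma norm_snd_le': "norm (snd v) \<le> norm v" by (metis norm_snd_le prod.collapse)

lemma dd_le: "dd p q \<le> 3 * norm (p - q)"
proof -
  have 1: "\<bar>fst p - fst q\<bar> \<le> norm (p - q)" using norm_fst_le'[of "p - q"] by simp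
  have 2: "\<bar>fst (snd p) - fst (snd q)\<bar> \<le> norm (p - q)"
    using norm_fst_le'[of "snd (p - q)"] norm_snd_le'[of "p - q"] by simp
  have 3: "\<bar>snd (snd p) - snd (snd q)\<bar> \<le> norm (p - q)"
    using norm_snd_le'[of "snd (p - q)"] norm_snd_le'[of "p - q"] by simp
  show ?thesis using 1 2 3 unfolding dd_def by linarith
qed

lemma norm3_le: "norm ((a::real, b::real, c::real)) \<le> \<bar>a\<bar> + \<bar>b\<bar> + \<bar>c\<bar>"
  using norm_Pair_le[of a "(b,c)"] norm_Pair_le[of b c] by simp

lemma xyz_exists:
  fixes \<alpha> \<beta> m K x0 y0 z0 :: real
  assumes K2: "K > 2" and mK: "2 * \<beta> = m * K"
    and pos: "x0 > 0" "y0 > 0" "z0 > 0" "x0 + y0 < K"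
  shows "\<exists>x y z. x 0 = x0 \<and> y 0 = y0 \<and> z 0 = z0 \<and> (\<forall>t\<ge>0. 0 < x t \<and> 0 < y t \<and> 0 < z t \<and> x t + y t < K \<and>
     (x has_real_derivative x t * (2 * z t * (1 - x t) + 2 * \<beta> - m * (x t + y t))) (at t within {0..}) \<and>
     (y has_real_derivative y t * (2 * z t * (1 - y t) - 2 * \<beta> + m * (x t + y t))) (at t within {0..}) \<and>
     (z has_real_derivative z t * (- 2 * z t + 2 * \<alpha> + m * (y t - x t))) (at t within {0..}))"
proof -
  define Zm where "Zm = max z0 (\<bar>\<alpha>\<bar> + \<bar>m\<bar> * K + 1) + 1"
  have Zm: "Zm > z0" "Zm > \<bar>\<alpha>\<bar> + \<bar>m\<bar> * K" "Zm > 0" using pos by (auto simp: Zm_def)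
  define cK where "cK = ln K"
  define cZ where "cZ = ln Zm"
  have ecK: "exp cK = K" using K2 by (simp add: cK_def)
  have ecZ: "exp cZ = Zm" using Zm by (simp add: cZ_def)
  define ex where "ex p = clp cK (fst p)" for p :: r3
  define ey where "ey p = clp cK (fst (snd p))" for p :: r3
  define ez where "ez p = clp cZ (snd (snd p))" for p :: r3
  define h1 where "h1 p = 2 * ez p * (1 - ex p) + 2 * \<beta> - m * (ex p + ey p)" for p
  define h2 where "h2 p = 2 * ez p * (1 - ey p) - 2 * \<beta> + m * (ex p + ey p)" for p
  define h3 where "h3 p = - 2 * ez p + 2 * \<alpha> + m * (ey p - ex p)" for p
  define H where "H p = (h1 p, h2 p, h3 p)" for p
  note lipI = LIP_add LIP_diff LIP_mult LIP_const BND_add BND_diff BND_mult BND_const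
     LIP_clp1 LIP_clp2 LIP_clp3 BND_clp
  have "LIP h1" unfolding h1_def ex_def ey_def ez_def by (intro lipI)
  then obtain C1 where C1: "\<And>p q. \<bar>h1 p - h1 q\<bar> \<le> C1 * dd p q" unfolding LIP_def by blast
  have "LIP h2" unfolding h2_def ex_def ey_def ez_def by (intro lipI)
  then obtain C2 where C2: "\<And>p q. \<bar>h2 p - h2 q\<bar> \<le> C2 * dd p q" unfolding LIP_def by blast
  have "LIP h3" unfolding h3_def ex_def ey_def ez_def by (intro lipI)
  then obtain C3 where C3: "\<And>p q. \<bar>h3 p - h3 q\<bar> \<le> C3 * dd p q" unfolding LIP_def by blast
  have "BND h1" unfolding h1_def ex_def ey_def ez_def by (intro lipI)
  then obtain B1 where B1: "\<And>p. \<bar>h1 p\<bar> \<le> B1" unfolding BND_def by blast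
  have "BND h2" unfolding h2_def ex_def ey_def ez_def by (intro lipI)
  then obtain B2 where B2: "\<And>p. \<bar>h2 p\<bar> \<le> B2" unfolding BND_def by blast
  have "BND h3" unfolding h3_def ex_def ey_def ez_def by (intro lipI)
  then obtain B3 where B3: "\<And>p. \<bar>h3 p\<bar> \<le> B3" unfolding BND_def by blast
  define L where "L = 3 * (\<bar>C1\<bar> + \<bar>C2\<bar> + \<bar>C3\<bar>) + 1"
  have L0: "L > 0" by (simp add: L_def)
  have Lip: "norm (H p - H q) \<le> L * norm (p - q)" for p q
  proof -
    have "norm (H p - H q) \<le> \<bar>h1 p - h1 q\<bar> + \<bar>h2 p - h2 q\<bar> + \<bar>h3 p - h3 q\<bar>"
      using norm3_le[of "h1 p - h1 q" "h2 p - h2 q" "h3 p - h3 q"] by (simp add: H_def)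
    also have "\<dots> \<le> (\<bar>C1\<bar> + \<bar>C2\<bar> + \<bar>C3\<bar>) * dd p q"
    proof -
      have "C1 * dd p q \<le> \<bar>C1\<bar> * dd p q" "C2 * dd p q \<le> \<bar>C2\<bar> * dd p q" "C3 * dd p q \<le> \<bar>C3\<bar> * dd p q"
        using dd_nonneg[of p q] by (auto intro!: mult_right_mono)
      then show ?thesis using C1[of p q] C2[of p q] C3[of p q] by (simp add: distrib_right)
    qed
    also have "\<dots> \<le> (\<bar>C1\<bar> + \<bar>C2\<bar> + \<bar>C3\<bar>) * (3 * norm (p - q))"
      using dd_le[of p q] by (intro mult_left_mono) auto
    also have "\<dots> \<le> L * norm (p - q)" by (simp add: L_def algebra_simps)
    finally show ?thesis .
  qed
  have Bd: "norm (H p) \<le> B1 + B2 + B3" for p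
    using norm3_le[of "h1 p" "h2 p" "h3 p"] B1[of p] B2[of p] B3[of p] by (simp add: H_def)
  obtain u where u0: "u 0 = (ln x0, ln y0, ln z0)"
    and uD: "\<And>t. t \<ge> 0 \<Longrightarrow> (u has_vector_derivative H (u t)) (at t within {0..})"
    using picard_global[OF Lip Bd L0, of "(ln x0, ln y0, ln z0)"] by blast
  define X where "X t = fst (u t)" for t
  define Y where "Y t = fst (snd (u t))" for t
  define W where "W t = snd (snd (u t))" for t
  have XD: "(X has_real_derivative h1 (u t)) (at t within {0..})" if "t \<ge> 0" for t
    using vd_fst[OF uD[OF that]] unfolding has_real_derivative_iff_has_vector_derivative
    by (simp add: X_def[abs_def] H_def)
  have YD: "(Y has_real_derivative h2 (u t)) (at t within {0..})" if "t \<ge> 0" for t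
    using vd_fst[OF vd_snd[OF uD[OF that]]] unfolding has_real_derivative_iff_has_vector_derivative
    by (simp add: Y_def[abs_def] H_def)
  have WD: "(W has_real_derivative h3 (u t)) (at t within {0..})" if "t \<ge> 0" for t
    using vd_snd[OF vd_snd[OF uD[OF that]]] unfolding has_real_derivative_iff_has_vector_derivative
    by (simp add: W_def[abs_def] H_def)
  have exb: "0 < ex p" "ex p \<le> K" "0 < ey p" "ey p \<le> K" "0 < ez p" "ez p \<le> Zm" for p
    unfolding ex_def ey_def ez_def using clp_pos clp_le ecK ecZ by metis+
  have Wlt: "W t < cZ" if "t \<ge> 0" for t
  proof -
    have "cZ - W t > 0"
    proof (rule stay_pos[where \<phi>="\<lambda>t. cZ - W t" and \<phi>'="\<lambda>t. - h3 (u t)"])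
      show "((\<lambda>t. cZ - W t) has_real_derivative - h3 (u t)) (at t within {0..})" if "t \<ge> 0" for t
        using WD[OF that] by (intro derivative_eq_intros) auto
      show "0 < cZ - W 0" using u0 Zm pos by (simp add: W_def cZ_def)
      show "0 < - h3 (u t)" if "t > 0" "cZ - W t = 0" for t
      proof -
        have "ez (u t) = Zm" using that ecZ by (simp add: ez_def clp_eq W_def)
        moreover have "m * (ey (u t) - ex (u t)) \<le> \<bar>m\<bar> * K"
        proof -
          have "\<bar>ey (u t) - ex (u t)\<bar> \<le> K" using exb[of "u t"] by (simp add: abs_le_iff)
          then have "\<bar>m * (ey (u t) - ex (u t))\<bar> \<le> \<bar>m\<bar> * K"
            unfolding abs_mult by (intro mult_left_mono) auto
          then show ?thesis by (simp add: abs_le_iff)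
        qed
        moreover have "\<bar>m\<bar> * K \<ge> 0" using K2 by simp
        ultimately show ?thesis using Zm abs_ge_self[of \<alpha>] by (simp add: h3_def)
      qed
    qed (use that in auto)
    then show ?thesis by simp
  qed
  have Slt: "exp (X t) + exp (Y t) < K" if "t \<ge> 0" for t
  proof -
    have "K - exp (X t) - exp (Y t) > 0"
    proof (rule stay_pos[where \<phi>="\<lambda>t. K - exp (X t) - exp (Y t)"
        and \<phi>'="\<lambda>t. - (exp (X t) * h1 (u t)) - exp (Y t) * h2 (u t)"])
      show "((\<lambda>t. K - exp (X t) - exp (Y t)) has_real_derivative
          - (exp (X t) * h1 (u t)) - exp (Y t) * h2 (u t)) (at t within {0..})" if "t \<ge> 0" for t
        using XD[OF that] YD[OF that] by (auto intro!: derivative_eq_intros)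
      show "0 < K - exp (X 0) - exp (Y 0)" using u0 pos by (simp add: X_def Y_def)
      show "0 < - (exp (X t) * h1 (u t)) - exp (Y t) * h2 (u t)" if "t > 0" "K - exp (X t) - exp (Y t) = 0" for t
      proof -
        define x where "x = exp (X t)"
        define y where "y = exp (Y t)"
        have xy: "x > 0" "y > 0" "x + y = K" using that by (auto simp: x_def y_def)
        have "X t \<le> cK" using xy ecK by (simp add: x_def[symmetric] cK_def ln_ge_iff)
        then have ex: "ex (u t) = x" by (simp add: ex_def clp_eq X_def x_def)
        have "Y t \<le> cK" using xy ecK by (simp add: y_def[symmetric] cK_def ln_ge_iff)
        then have ey: "ey (u t) = y" by (simp add: ey_def clp_eq Y_def y_def)
        define w where "w = ez (u t)"
        have w: "w > 0" using exb by (simp add: w_def)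
        have "x * h1 (u t) + y * h2 (u t) = 2 * w * (x + y - x^2 - y^2)"
        proof -
          have b: "2 * \<beta> = m * (x + y)" using xy mK by simp
          show ?thesis unfolding h1_def h2_def ex ey w_def[symmetric]
            using b by (simp add: algebra_simps power2_eq_square)
        qed
        also have "x + y - x^2 - y^2 < 0"
        proof -
          have "(x + y)^2 \<le> 2 * (x^2 + y^2)" using sum_squares_ge_zero[of "x - y" 0]
            by (simp add: power2_eq_square algebra_simps)
          then have "K^2 \<le> 2 * (x^2 + y^2)" using xy by simp
          moreover have "2 * K < K^2" using K2 by (simp add: power2_eq_square)
          ultimately have "K < x^2 + y^2" by (smt (verit))
          then show ?thesis using xy(3) by linarith
        qed
        then have "2 * w * (x + y - x^2 - y^2) < 0" using w by (simp add: mult_pos_neg)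
        finally show ?thesis by (simp add: x_def y_def)
      qed
    qed (use that in auto)
    then show ?thesis by simp
  qed
  define x where "x t = exp (X t)" for t
  define y where "y t = exp (Y t)" for t
  define z where "z t = exp (W t)" for t
  have eqs: "ex (u t) = x t" "ey (u t) = y t" "ez (u t) = z t" if "t \<ge> 0" for t
  proof -
    have "exp (X t) < K" "exp (Y t) < K" using Slt[OF that] exp_gt_zero[of "X t"] exp_gt_zero[of "Y t"]
      by linarith+
    then have "X t \<le> cK" "Y t \<le> cK" using K2 by (auto simp: cK_def ln_ge_iff less_imp_le)
    then show "ex (u t) = x t" "ey (u t) = y t"
      by (simp_all add: ex_def ey_def clp_eq X_def Y_def x_def y_def)
    show "ez (u t) = z t" using Wlt[OF that] by (simp add: ez_def clp_eq W_def z_def)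
  qed
  show ?thesis
  proof (intro exI conjI allI impI)
    show "x 0 = x0" "y 0 = y0" "z 0 = z0" using u0 pos by (simp_all add: x_def y_def z_def X_def Y_def W_def)
    fix t :: real assume t: "t \<ge> 0"
    show "0 < x t" "0 < y t" "0 < z t" by (simp_all add: x_def y_def z_def)
    show "x t + y t < K" using Slt[OF t] by (simp add: x_def y_def)
    show "(x has_real_derivative x t * (2 * z t * (1 - x t) + 2 * \<beta> - m * (x t + y t))) (at t within {0..})"
      unfolding x_def[abs_def] using XD[OF t] eqs[OF t]
      by (auto intro!: derivative_eq_intros simp: h1_def x_def y_def z_def)
    show "(y has_real_derivative y t * (2 * z t * (1 - y t) - 2 * \<beta> + m * (x t + y t))) (at t within {0..})"
      unfolding y_def[abs_def] using YD[OF t] eqs[OF t]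
      by (auto intro!: derivative_eq_intros simp: h2_def x_def y_def z_def)
    show "(z has_real_derivative z t * (- 2 * z t + 2 * \<alpha> + m * (y t - x t))) (at t within {0..})"
      unfolding z_def[abs_def] using WD[OF t] eqs[OF t]
      by (auto intro!: derivative_eq_intros simp: h3_def x_def y_def z_def)
  qed
qed

definition mm :: "nat \<Rightarrow> real \<Rightarrow> real" where "mm \<kappa> \<beta> = \<beta> * (real \<kappa> - 1) / real \<kappa>"
definition Fa :: "real \<Rightarrow> real \<Rightarrow> real \<Rightarrow> real \<Rightarrow> real" where
  "Fa \<alpha> \<beta> a b = 2 - 2 * (\<alpha> * a + \<beta> * b)"
definition Fb :: "nat \<Rightarrow> real \<Rightarrow> real \<Rightarrow> real \<Rightarrow> real \<Rightarrow> real \<Rightarrow> real" where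
  "Fb \<kappa> \<alpha> \<beta> a b c = - (2 * \<alpha> * b + 2 * \<beta> * a / real \<kappa> + 2 * \<beta> * (real \<kappa> - 1) * c / real \<kappa>)"
definition Fc :: "nat \<Rightarrow> real \<Rightarrow> real \<Rightarrow> real \<Rightarrow> real \<Rightarrow> real \<Rightarrow> real" where
  "Fc \<kappa> \<alpha> \<beta> a b c = - 2 * ((\<beta> / real \<kappa> + mm \<kappa> \<beta> * gg a b c) * b + (\<alpha> + mm \<kappa> \<beta> * ff a b c) * c)"
definition Gp :: "nat \<Rightarrow> real \<Rightarrow> real \<Rightarrow> real \<Rightarrow> real \<Rightarrow> real" where
  "Gp \<kappa> \<alpha> \<beta> sp e = 2 - 2 * (\<alpha> + \<beta>) * sp + 2 * mm \<kappa> \<beta> * e"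
definition Gm :: "nat \<Rightarrow> real \<Rightarrow> real \<Rightarrow> real \<Rightarrow> real \<Rightarrow> real" where
  "Gm \<kappa> \<alpha> \<beta> sm e = 2 - 2 * (\<alpha> - \<beta>) * sm - 2 * mm \<kappa> \<beta> * e"
definition Ge :: "nat \<Rightarrow> real \<Rightarrow> real \<Rightarrow> real \<Rightarrow> real \<Rightarrow> real \<Rightarrow> real" where
  "Ge \<kappa> \<alpha> \<beta> sp sm e = 2 - 2 * \<alpha> * e - mm \<kappa> \<beta> * e^2 / sm + mm \<kappa> \<beta> * e^2 / sp"

lemma ident_p: "\<kappa> > 0 \<Longrightarrow> Fa \<alpha> \<beta> a b + Fb \<kappa> \<alpha> \<beta> a b c = Gp \<kappa> \<alpha> \<beta> (a + b) (a - c)"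
  by (simp add: Fa_def Fb_def Gp_def mm_def field_simps)
lemma ident_m: "\<kappa> > 0 \<Longrightarrow> Fa \<alpha> \<beta> a b - Fb \<kappa> \<alpha> \<beta> a b c = Gm \<kappa> \<alpha> \<beta> (a - b) (a - c)"
  by (simp add: Fa_def Fb_def Gm_def mm_def field_simps)
lemma key_gf:
  assumes "a + b \<noteq> 0" "a - b \<noteq> 0"
  shows "gg a b c * b + ff a b c * c = b - b * (a - c)^2 / ((a + b) * (a - b))"
proof -
  have u: "a^2 - b^2 = (a + b) * (a - b)" by (simp add: power2_eq_square algebra_simps)
  have "(a + b) * (a - b) \<noteq> 0" using assms by simp
  then show ?thesis unfolding gg_def ff_def u
    by (simp add: divide_simps) (simp add: power2_eq_square algebra_simps)
qed

lemma ident_e: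
  assumes "a + b \<noteq> 0" "a - b \<noteq> 0" "\<kappa> > 0"
  shows "Fa \<alpha> \<beta> a b - Fc \<kappa> \<alpha> \<beta> a b c = Ge \<kappa> \<alpha> \<beta> (a + b) (a - b) (a - c)"
proof -
  have k: "gg a b c * b + ff a b c * c = b - b * (a - c)^2 / ((a + b) * (a - b))" by (rule key_gf[OF assms(1,2)])
  have "Fa \<alpha> \<beta> a b - Fc \<kappa> \<alpha> \<beta> a b c = 2 - 2 * \<alpha> * (a - c) - 2 * \<beta> * b + 2 * \<beta> * b / real \<kappa>
      + 2 * mm \<kappa> \<beta> * (gg a b c * b + ff a b c * c)"
    by (simp add: Fa_def Fc_def algebra_simps)
  also have "\<dots> = 2 - 2 * \<alpha> * (a - c) - 2 * mm \<kappa> \<beta> * (b * (a - c)^2 / ((a + b) * (a - b)))"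
  proof -
    have "- 2 * \<beta> * b + 2 * \<beta> * b / real \<kappa> + 2 * mm \<kappa> \<beta> * (b - X) = - 2 * mm \<kappa> \<beta> * X" for X
      using assms(3) by (simp add: mm_def field_simps)
    from this[of "b * (a - c)^2 / ((a + b) * (a - b))"] show ?thesis unfolding k by simp
  qed
  also have "\<dots> = Ge \<kappa> \<alpha> \<beta> (a + b) (a - b) (a - c)"
  proof -
    have "mm \<kappa> \<beta> * (a - c)^2 / (a - b) - mm \<kappa> \<beta> * (a - c)^2 / (a + b) = 2 * mm \<kappa> \<beta> * (b * (a - c)^2 / ((a + b) * (a - b)))"
      using assms(1,2) by (simp add: divide_simps) (simp add: algebra_simps)
    then show ?thesis unfolding Ge_def by simp
  qed
  finally show ?thesis .
qed

lemma matL_explicit: "matL \<kappa> \<alpha> \<beta> A i k = (if i = 0 \<and> k = 0 then \<alpha> else if i = k then alpha_t \<kappa> \<alpha> \<beta> A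
   else if i = 0 then \<beta> / real \<kappa> else if k = 0 then beta_t \<kappa> \<alpha> \<beta> A else 0)"
  by (simp add: matL_def matQ_def matI_def matP_def mat_tr_def)

lemma sum_split0: "(\<Sum>k\<le>(\<kappa>::nat). f k) = f 0 + (\<Sum>k\<in>{1..\<kappa>}. f k)"
proof -
  have "{..\<kappa>} = insert 0 {1..\<kappa>}" using atLeastAtMost_insertL[of 0 \<kappa>] by (simp add: atMost_atLeast0)
  then show ?thesis by simp
qed

lemma sum_col:
  assumes "j \<le> \<kappa>" "\<kappa> \<ge> 1"
  shows "(\<Sum>k\<in>{1..\<kappa>}. matM \<kappa> a b c k j) = (if j = 0 then real \<kappa> * b else a + (real \<kappa> - 1) * c)"
proof (cases "j = 0")
  case True
  have "(\<Sum>k\<in>{1..\<kappa>}. matM \<kappa> a b c k j) = (\<Sum>k\<in>{1..\<kappa>}. b)"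
    by (rule sum.cong) (auto simp: matM_def True)
  then show ?thesis using True by simp
next
  case False
  have jin: "j \<in> {1..\<kappa>}" using False assms by auto
  have "(\<Sum>k\<in>{1..\<kappa>}. matM \<kappa> a b c k j) = matM \<kappa> a b c j j + (\<Sum>k\<in>{1..\<kappa>} - {j}. matM \<kappa> a b c k j)"
    by (rule sum.remove[OF _ jin]) simp
  also have "(\<Sum>k\<in>{1..\<kappa>} - {j}. matM \<kappa> a b c k j) = (\<Sum>k\<in>{1..\<kappa>} - {j}. c)"
    by (rule sum.cong) (auto simp: matM_def False)
  also have "\<dots> = real (\<kappa> - 1) * c" using jin by (simp add: card_Diff_singleton)
  finally show ?thesis using False assms by (simp add: matM_def of_nat_diff)
qed

lemma I1: "a^2 - b^2 \<noteq> 0 \<Longrightarrow> gg a b c * b + ff a b c * a = b"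
  unfolding gg_def ff_def by (simp add: divide_simps) (simp add: power2_eq_square algebra_simps)
lemma I2: "a^2 - b^2 \<noteq> 0 \<Longrightarrow> gg a b c * a + ff a b c * b = c"
  unfolding gg_def ff_def by (simp add: divide_simps) (simp add: power2_eq_square algebra_simps)

lemma matF_M:
  assumes k2: "\<kappa> \<ge> 2" and A: "mat_eq_on \<kappa> A (matM \<kappa> a b c)" and ab: "\<bar>a\<bar> \<noteq> \<bar>b\<bar>"
  shows "mat_eq_on \<kappa> (matF \<kappa> \<alpha> \<beta> A) (matM \<kappa> (Fa \<alpha> \<beta> a b) (Fb \<kappa> \<alpha> \<beta> a b c) (Fc \<kappa> \<alpha> \<beta> a b c))"
proof -
  define M where "M = matM \<kappa> a b c"
  have AM: "A i j = M i j" if "i \<le> \<kappa>" "j \<le> \<kappa>" for i j using A that by (simp add: mat_eq_on_def M_def)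
  have Msym: "M i j = M j i" for i j by (auto simp: M_def matM_def)
  have a0: "A 0 0 = a" "A 0 1 = b" "A 1 2 = c" using AM[of 0 0] AM[of 0 1] AM[of 1 2] k2 by (auto simp: M_def matM_def)
  have a0': "A 0 (Suc 0) = b" "A (Suc 0) 2 = c" using a0 by simp_all
  have d: "a^2 - b^2 \<noteq> 0" using ab by (metis abs_eq_iff' abs_minus_cancel power2_eq_iff right_minus_eq)
  define aT where "aT = alpha_t \<kappa> \<alpha> \<beta> A"
  define bT where "bT = beta_t \<kappa> \<alpha> \<beta> A"
  have aT: "aT = \<alpha> + mm \<kappa> \<beta> * ff a b c" using ab by (simp add: aT_def alpha_t_def a0 a0' Let_def mm_def)
  have bT: "bT = \<beta> / real \<kappa> + mm \<kappa> \<beta> * gg a b c" using ab by (simp add: bT_def beta_t_def a0 a0' Let_def mm_def)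
  define R where "R i j = (\<Sum>k\<le>\<kappa>. matL \<kappa> \<alpha> \<beta> A i k * A k j)" for i j
  have R0: "R 0 j = \<alpha> * M 0 j + \<beta> / real \<kappa> * (\<Sum>k\<in>{1..\<kappa>}. M k j)" if "j \<le> \<kappa>" for j
  proof -
    have "R 0 j = \<alpha> * A 0 j + (\<Sum>k\<in>{1..\<kappa>}. \<beta> / real \<kappa> * A k j)"
      unfolding R_def sum_split0 by (simp add: matL_explicit)
    also have "(\<Sum>k\<in>{1..\<kappa>}. \<beta> / real \<kappa> * A k j) = (\<Sum>k\<in>{1..\<kappa>}. \<beta> / real \<kappa> * M k j)"
      by (rule sum.cong) (auto simp: AM that)
    finally show ?thesis using that by (simp add: AM sum_distrib_left)
  qed
  have Ri: "R i j = bT * M 0 j + aT * M i j" if "j \<le> \<kappa>" "1 \<le> i" "i \<le> \<kappa>" for i j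
  proof -
    have "(\<Sum>k\<in>{1..\<kappa>}. matL \<kappa> \<alpha> \<beta> A i k * A k j) = (\<Sum>k\<in>{1..\<kappa>}. (if k = i then aT * A k j else 0))"
      by (rule sum.cong) (use that in \<open>auto simp: matL_explicit aT_def\<close>)
    then have "R i j = bT * A 0 j + (\<Sum>k\<in>{1..\<kappa>}. (if k = i then aT * A k j else 0))"
      unfolding R_def sum_split0 using that by (simp add: matL_explicit bT_def)
    also have "(\<Sum>k\<in>{1..\<kappa>}. (if k = i then aT * A k j else 0)) = aT * A i j"
      using that by (simp add: sum.delta')
    finally show ?thesis using that by (simp add: AM)
  qed
  have F: "matF \<kappa> \<alpha> \<beta> A i j = 2 * matI i j - R i j - R j i" if "i \<le> \<kappa>" "j \<le> \<kappa>" for i j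
  proof -
    have "mat_mult \<kappa> A (mat_tr (matL \<kappa> \<alpha> \<beta> A)) i j = R j i"
      unfolding mat_mult_def mat_tr_def R_def
      by (rule sum.cong) (auto simp: AM that Msym mult.commute)
    then show ?thesis by (simp add: matF_def mat_mult_def R_def)
  qed
  have k1: "\<kappa> \<ge> 1" "real \<kappa> > 0" using k2 by auto
  have mmc: "bT * a + aT * b = \<beta> * a / real \<kappa> + \<alpha> * b + mm \<kappa> \<beta> * c"
  proof -
    have "bT * a + aT * b = \<beta> * a / real \<kappa> + \<alpha> * b + mm \<kappa> \<beta> * (gg a b c * a + ff a b c * b)"
      unfolding aT bT by (simp add: algebra_simps)
    then show ?thesis unfolding I2[OF d] .
  qed
  have Fbe: "- (\<alpha> * b + \<beta> / real \<kappa> * (a + (real \<kappa> - 1) * c)) - (\<beta> * a / real \<kappa> + \<alpha> * b + mm \<kappa> \<beta> * c)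
     = Fb \<kappa> \<alpha> \<beta> a b c"
    unfolding Fb_def mm_def by (simp add: algebra_simps add_divide_distrib diff_divide_distrib)
  show ?thesis unfolding mat_eq_on_def
  proof (intro allI impI)
    fix i j assume ij: "i \<le> \<kappa>" "j \<le> \<kappa>"
    show "matF \<kappa> \<alpha> \<beta> A i j = matM \<kappa> (Fa \<alpha> \<beta> a b) (Fb \<kappa> \<alpha> \<beta> a b c) (Fc \<kappa> \<alpha> \<beta> a b c) i j"
    proof (cases "i = 0")
      case i0: True
      show ?thesis
      proof (cases "j = 0")
        case True
        have "R 0 0 = \<alpha> * a + \<beta> * b" using R0[of 0] sum_col[of 0 \<kappa> a b c] k1 by (simp add: M_def matM_def)
        then show ?thesis using i0 True F[OF ij] by (simp add: matM_def matI_def Fa_def)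
      next
        case False
        have r1: "R 0 j = \<alpha> * b + \<beta> / real \<kappa> * (a + (real \<kappa> - 1) * c)"
          using R0[OF ij(2)] sum_col[OF ij(2) k1(1), of a b c] False by (simp add: M_def matM_def)
        have r2: "R j 0 = bT * a + aT * b" using Ri[of 0 j] ij False by (simp add: M_def matM_def)
        show ?thesis using i0 False F[OF ij] r1 r2 mmc Fbe by (simp add: matM_def matI_def)
      qed
    next
      case i1: False
      show ?thesis
      proof (cases "j = 0")
        case True
        have r1: "R 0 i = \<alpha> * b + \<beta> / real \<kappa> * (a + (real \<kappa> - 1) * c)"
          using R0[OF ij(1)] sum_col[OF ij(1) k1(1), of a b c] i1 by (simp add: M_def matM_def)
        have r2: "R i 0 = bT * a + aT * b" using Ri[of 0 i] ij i1 by (simp add: M_def matM_def)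
        show ?thesis using i1 True F[OF ij] r1 r2 mmc Fbe by (simp add: matM_def matI_def)
      next
        case j1: False
        show ?thesis
        proof (cases "i = j")
          case True
          have "bT * b + aT * a = \<alpha> * a + \<beta> * b"
          proof -
            have "bT * b + aT * a = \<alpha> * a + \<beta> * b / real \<kappa> + mm \<kappa> \<beta> * (gg a b c * b + ff a b c * a)"
              unfolding aT bT by (simp add: algebra_simps)
            also have "\<dots> = \<alpha> * a + \<beta> * b / real \<kappa> + mm \<kappa> \<beta> * b" unfolding I1[OF d] ..
            also have "\<dots> = \<alpha> * a + \<beta> * b" using k1 unfolding mm_def by (simp add: field_simps)
            finally show ?thesis .
          qed
          moreover have "R i i = bT * b + aT * a" using Ri[of i i] ij i1 by (simp add: M_def matM_def)
          ultimately show ?thesis using True F[OF ij] by (simp add: matM_def matI_def Fa_def)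
        next
          case False
          have "R i j = bT * b + aT * c" "R j i = bT * b + aT * c"
            using Ri[of j i] Ri[of i j] ij i1 j1 False by (simp_all add: M_def matM_def)
          then show ?thesis using i1 j1 False F[OF ij] by (simp add: matM_def matI_def Fc_def aT bT)
        qed
      qed
    qed
  qed
qed

lemma quad_M:
  fixes v :: "nat \<Rightarrow> real" and \<kappa> :: nat
  defines "S \<equiv> (\<Sum>i\<in>{1..\<kappa>}. v i)" and "T \<equiv> (\<Sum>i\<in>{1..\<kappa>}. (v i)^2)"
  shows "(\<Sum>i\<le>\<kappa>. \<Sum>j\<le>\<kappa>. v i * matM \<kappa> a b c i j * v j) = a * (v 0)^2 + 2 * b * v 0 * S + c * S^2 + (a - c) * T"
proof -
  have row0: "(\<Sum>j\<le>\<kappa>. v 0 * matM \<kappa> a b c 0 j * v j) = v 0 * (a * v 0 + b * S)"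
  proof -
    have "(\<Sum>j\<in>{1..\<kappa>}. v 0 * matM \<kappa> a b c 0 j * v j) = (\<Sum>j\<in>{1..\<kappa>}. v 0 * b * v j)"
      by (rule sum.cong) (auto simp: matM_def)
    then show ?thesis unfolding sum_split0 S_def by (simp add: matM_def sum_distrib_left algebra_simps)
  qed
  have rowi: "(\<Sum>j\<le>\<kappa>. v i * matM \<kappa> a b c i j * v j) = v i * (b * v 0 + c * S + (a - c) * v i)"
    if i: "i \<in> {1..\<kappa>}" for i
  proof -
    have "(\<Sum>j\<in>{1..\<kappa>}. v i * matM \<kappa> a b c i j * v j) =
        (\<Sum>j\<in>{1..\<kappa>}. v i * c * v j + (if j = i then v i * (a - c) * v j else 0))"
      by (rule sum.cong) (use i in \<open>auto simp: matM_def algebra_simps\<close>)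
    also have "\<dots> = v i * c * S + v i * (a - c) * v i"
      using i by (simp add: sum.distrib sum_distrib_left S_def)
    finally show ?thesis unfolding sum_split0 using i by (simp add: matM_def algebra_simps)
  qed
  have "(\<Sum>i\<le>\<kappa>. \<Sum>j\<le>\<kappa>. v i * matM \<kappa> a b c i j * v j) =
      v 0 * (a * v 0 + b * S) + (\<Sum>i\<in>{1..\<kappa>}. v i * (b * v 0 + c * S + (a - c) * v i))"
    unfolding sum_split0[of "\<lambda>i. \<Sum>j\<le>\<kappa>. v i * matM \<kappa> a b c i j * v j" \<kappa>] row0
    using rowi by (intro arg_cong[where f="\<lambda>x. _ + x"] sum.cong) auto
  also have "(\<Sum>i\<in>{1..\<kappa>}. v i * (b * v 0 + c * S + (a - c) * v i)) =
      (\<Sum>i\<in>{1..\<kappa>}. (b * v 0 + c * S) * v i + (a - c) * (v i)^2)"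
    by (rule sum.cong) (auto simp: algebra_simps power2_eq_square)
  also have "\<dots> = (b * v 0 + c * S) * S + (a - c) * T"
    by (simp add: sum.distrib sum_distrib_left S_def T_def)
  finally show ?thesis by (simp add: algebra_simps power2_eq_square)
qed

lemma pd_M:
  fixes \<kappa> :: nat
  assumes k: "\<kappa> \<ge> 2" and a: "a > 0" and e: "a - c > 0" and det: "a * (a + (real \<kappa> - 1) * c) > real \<kappa> * b^2"
  shows "pos_def \<kappa> (matM \<kappa> a b c)"
  unfolding pos_def_def
proof (rule conjI)
  show "\<forall>i\<le>\<kappa>. \<forall>j\<le>\<kappa>. matM \<kappa> a b c i j = matM \<kappa> a b c j i" by (auto simp: matM_def)
next
  show "\<forall>v. (\<exists>i\<le>\<kappa>. v i \<noteq> 0) \<longrightarrow> (\<Sum>i\<le>\<kappa>. \<Sum>j\<le>\<kappa>. v i * matM \<kappa> a b c i j * v j) > 0"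
  proof (intro allI impI)
  fix v :: "nat \<Rightarrow> real" assume nz: "\<exists>i\<le>\<kappa>. v i \<noteq> 0"
  define S where "S = (\<Sum>i\<in>{1..\<kappa>}. v i)"
  define T where "T = (\<Sum>i\<in>{1..\<kappa>}. (v i)^2)"
  define n where "n = real \<kappa>"
  have n: "n \<ge> 2" using k by (simp add: n_def)
  have CS: "S^2 \<le> T * n" using sum_squared_le_sum_of_squares[of v "{1..\<kappa>}"] by (simp add: S_def T_def n_def)
  have T0: "T \<ge> 0" by (simp add: T_def sum_nonneg)
  define p where "p = (a + (n - 1) * c) / n"
  have ap: "a * p > b^2" using det n by (simp add: p_def n_def[symmetric] field_simps)
  have Q: "(\<Sum>i\<le>\<kappa>. \<Sum>j\<le>\<kappa>. v i * matM \<kappa> a b c i j * v j) =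
     (a * v 0 + b * S)^2 / a + (p - b^2 / a) * S^2 + (a - c) * (T - S^2 / n)"
    unfolding quad_M S_def[symmetric] T_def[symmetric] using a n
    by (simp add: p_def field_simps power2_eq_square)
  have q1: "(a * v 0 + b * S)^2 / a \<ge> 0" using a by simp
  have pb: "p - b^2 / a > 0" using ap a by (simp add: field_simps)
  have "T - S^2 / n \<ge> 0" using CS n by (simp add: field_simps)
  then have q3: "(a - c) * (T - S^2 / n) \<ge> 0" using e by simp
  show "(\<Sum>i\<le>\<kappa>. \<Sum>j\<le>\<kappa>. v i * matM \<kappa> a b c i j * v j) > 0"
  proof (cases "S = 0")
    case False
    then have "(p - b^2 / a) * S^2 > 0" using pb by simp
    then show ?thesis unfolding Q using q1 q3 by linarith
  next
    case S0: True
    show ?thesis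
    proof (cases "v 0 = 0")
      case False
      then have "(a * v 0 + b * S)^2 / a > 0" using S0 a by simp
      then show ?thesis unfolding Q using q3 S0 by simp
    next
      case True
      then obtain i where i: "i \<in> {1..\<kappa>}" "v i \<noteq> 0" using nz by (metis atLeastAtMost_iff less_one not_le)
      have "T \<ge> (v i)^2" unfolding T_def by (rule member_le_sum) (use i in auto)
      then have "T > 0" using i by (smt (verit) zero_less_power2)
      then show ?thesis unfolding Q using S0 e True by simp
    qed
  qed
  qed
qed

lemma pos_def_cong:
  assumes eq: "mat_eq_on \<kappa> A B" and P: "pos_def \<kappa> A" shows "pos_def \<kappa> B"
proof -
  have sums: "(\<Sum>i\<le>\<kappa>. \<Sum>j\<le>\<kappa>. v i * A i j * v j) = (\<Sum>i\<le>\<kappa>. \<Sum>j\<le>\<kappa>. v i * B i j * v j)" for v :: "nat \<Rightarrow> real"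
    using eq unfolding mat_eq_on_def by (intro sum.cong) auto
  have "B i j = B j i" if "i \<le> \<kappa>" "j \<le> \<kappa>" for i j
  proof -
    have "B i j = A i j" using eq that by (simp add: mat_eq_on_def)
    also have "\<dots> = A j i" using P that by (simp add: pos_def_def)
    also have "\<dots> = B j i" using eq that by (simp add: mat_eq_on_def)
    finally show ?thesis .
  qed
  moreover have "\<forall>x. (\<exists>i\<le>\<kappa>. x i \<noteq> 0) \<longrightarrow> 0 < (\<Sum>i\<le>\<kappa>. \<Sum>j\<le>\<kappa>. x i * B i j * x j)"
    using P unfolding pos_def_def sums by blast
  ultimately show ?thesis unfolding pos_def_def by blast
qed

lemma pd_M_inv:
  fixes \<kappa> :: nat
  assumes k: "\<kappa> \<ge> 2" and P: "pos_def \<kappa> (matM \<kappa> a b c)"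
  shows "a - b > 0" "a + b > 0" "a - c > 0" "a * (a + (real \<kappa> - 1) * c) > real \<kappa> * b^2"
proof -
  have Q: "0 < a * (v 0)^2 + 2 * b * v 0 * (\<Sum>i\<in>{1..\<kappa>}. v i) + c * (\<Sum>i\<in>{1..\<kappa>}. v i)^2 + (a - c) * (\<Sum>i\<in>{1..\<kappa>}. (v i)^2)"
    if "\<exists>i\<le>\<kappa>. v i \<noteq> 0" for v :: "nat \<Rightarrow> real"
    using P that unfolding pos_def_def quad_M by blast
  have in1: "1 \<in> {1..\<kappa>}" "2 \<in> {1..\<kappa>}" using k by auto
  {
    fix w :: real
    define v where "v i = (if i = 0 then 1 else if i = 1 then w else 0)" for i :: nat
    have "(\<Sum>i\<in>{1..\<kappa>}. v i) = (\<Sum>i\<in>{1..\<kappa>}. if i = 1 then w else 0)"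
      by (rule sum.cong) (auto simp: v_def)
    then have S: "(\<Sum>i\<in>{1..\<kappa>}. v i) = w" using in1 by simp
    have "(\<Sum>i\<in>{1..\<kappa>}. (v i)^2) = (\<Sum>i\<in>{1..\<kappa>}. if i = 1 then w^2 else 0)"
      by (rule sum.cong) (auto simp: v_def)
    then have T: "(\<Sum>i\<in>{1..\<kappa>}. (v i)^2) = w^2" using in1 by simp
    have "\<exists>i\<le>\<kappa>. v i \<noteq> 0" by (rule exI[of _ 0]) (simp add: v_def)
    from Q[OF this] have "0 < a + 2 * b * w + c * w^2 + (a - c) * w^2"
      unfolding S T by (simp add: v_def)
  } note W = this
  show "a - b > 0" using W[of "-1"] by simp
  show "a + b > 0" using W[of 1] by simp
  have ap: "a > 0" using W[of "-1"] W[of 1] by simp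
  {
    define v where "v i = (if i = 1 then 1 else if i = 2 then -1 else (0::real))" for i :: nat
    have "(\<Sum>i\<in>{1..\<kappa>}. v i) = (\<Sum>i\<in>{1..\<kappa>}. (if i = 1 then 1 else 0) + (if i = 2 then -1 else 0))"
      by (rule sum.cong) (auto simp: v_def)
    then have S: "(\<Sum>i\<in>{1..\<kappa>}. v i) = 0" using in1 by (simp add: sum.distrib)
    have "(\<Sum>i\<in>{1..\<kappa>}. (v i)^2) = (\<Sum>i\<in>{1..\<kappa>}. (if i = 1 then 1 else 0) + (if i = 2 then 1 else 0))"
      by (rule sum.cong) (auto simp: v_def)
    then have T: "(\<Sum>i\<in>{1..\<kappa>}. (v i)^2) = 2" using in1 by (simp add: sum.distrib)
    have "\<exists>i\<le>\<kappa>. v i \<noteq> 0" using k by (intro exI[of _ 1]) (simp add: v_def)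
    from Q[OF this] have "0 < (a - c) * 2" unfolding S T by (simp add: v_def)
    then show "a - c > 0" by simp
  }
  {
    define t where "t = - real \<kappa> * b / a"
    define v where "v i = (if i = 0 then t else 1)" for i :: nat
    have S: "(\<Sum>i\<in>{1..\<kappa>}. v i) = real \<kappa>" by (simp add: v_def)
    have T: "(\<Sum>i\<in>{1..\<kappa>}. (v i)^2) = real \<kappa>" by (simp add: v_def)
    have "\<exists>i\<le>\<kappa>. v i \<noteq> 0" using k by (intro exI[of _ 1]) (simp add: v_def)
    from Q[OF this] have "0 < a * t^2 + 2 * b * t * real \<kappa> + c * (real \<kappa>)^2 + (a - c) * real \<kappa>"
      unfolding S T by (simp add: v_def power2_eq_square)
    also have "a * t^2 + 2 * b * t * real \<kappa> + c * (real \<kappa>)^2 + (a - c) * real \<kappa>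
       = real \<kappa> * ((a * (a + (real \<kappa> - 1) * c) - real \<kappa> * b^2) / a)"
      using ap by (simp add: t_def field_simps power2_eq_square)
    finally have "0 < real \<kappa> * ((a * (a + (real \<kappa> - 1) * c) - real \<kappa> * b^2) / a)" .
    then have "0 < (a * (a + (real \<kappa> - 1) * c) - real \<kappa> * b^2) / a"
      by (rule zero_less_mult_pos) (use k in simp)
    then show "a * (a + (real \<kappa> - 1) * c) > real \<kappa> * b^2" using ap by (simp add: zero_less_divide_iff)
  }
qed

lemma cuv: fixes c C x y :: real assumes "\<bar>c\<bar> \<le> C" shows "c * x * y \<le> C * (x^2 + y^2) / 2"
proof -
  have "c * x * y \<le> \<bar>c\<bar> * (\<bar>x\<bar> * \<bar>y\<bar>)" by (metis abs_ge_self abs_mult mult.assoc)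
  also have "\<dots> \<le> C * (\<bar>x\<bar> * \<bar>y\<bar>)" using assms by (intro mult_right_mono) auto
  also have "\<bar>x\<bar> * \<bar>y\<bar> \<le> (x^2 + y^2) / 2"
  proof -
    have "0 \<le> (\<bar>x\<bar> - \<bar>y\<bar>)^2" by simp
    then show ?thesis by (simp add: power2_eq_square algebra_simps)
  qed
  then have "C * (\<bar>x\<bar> * \<bar>y\<bar>) \<le> C * ((x^2 + y^2) / 2)"
    using assms abs_ge_zero order_trans by (intro mult_left_mono) blast+
  finally show ?thesis by simp
qed

lemma ratio_bounds:
  fixes \<delta> E1 E2 B M1 M2 :: real
  assumes d: "\<delta> > 0" and E: "\<bar>E1\<bar> < B" "\<bar>E2\<bar> < B" and M: "M1 \<ge> \<delta>" "M2 \<ge> \<delta>"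
  shows "\<bar>(E1 + E2) / M1\<bar> \<le> 2 * B / \<delta>" "\<bar>E2^2 / (M1 * M2)\<bar> \<le> B^2 / \<delta>^2"
proof -
  have M1p: "M1 > 0" "M2 > 0" using d M by auto
  have "\<bar>(E1 + E2) / M1\<bar> = \<bar>E1 + E2\<bar> / M1" using M1p by simp
  also have "\<dots> \<le> 2 * B / \<delta>"
    by (rule frac_le) (use E d M abs_triangle_ineq[of E1 E2] in auto)
  finally show "\<bar>(E1 + E2) / M1\<bar> \<le> 2 * B / \<delta>" .
  have "\<bar>E2\<bar> \<le> \<bar>B\<bar>" using E(2) by linarith
  then have "E2^2 \<le> B^2" using abs_le_square_iff by blast
  moreover have "\<delta>^2 \<le> M1 * M2" using d M unfolding power2_eq_square by (intro mult_mono) auto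
  ultimately have "E2^2 / (M1 * M2) \<le> B^2 / \<delta>^2"
    using d by (intro frac_le) auto
  then show "\<bar>E2^2 / (M1 * M2)\<bar> \<le> B^2 / \<delta>^2" using M1p by simp
qed

lemma sq_ratio_diff: "(M1::real) \<noteq> 0 \<Longrightarrow> M2 \<noteq> 0 \<Longrightarrow>
   E1^2 / M1 - E2^2 / M2 = (E1 + E2) / M1 * (E1 - E2) - E2^2 / (M1 * M2) * (M1 - M2)"
  by (simp add: field_simps power2_eq_square)

lemma quad_ineq:
  fixes m \<alpha> \<beta> \<delta> B P1 P2 M1 M2 E1 E2 :: real
  assumes d: "\<delta> > 0" and B: "B > 0"
    and P: "P1 \<ge> \<delta>" "P2 \<ge> \<delta>" and M: "M1 \<ge> \<delta>" "M2 \<ge> \<delta>" and E: "\<bar>E1\<bar> < B" "\<bar>E2\<bar> < B"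
  defines "C \<equiv> 2 * \<bar>\<alpha>\<bar> + 2 * \<bar>\<beta>\<bar> + 2 * \<bar>m\<bar> + \<bar>m\<bar> * (4 * B / \<delta>) + \<bar>m\<bar> * (B^2 / \<delta>^2)"
  shows "2 * ((P1 - P2) * ((2 - 2 * (\<alpha> + \<beta>) * P1 + 2 * m * E1) - (2 - 2 * (\<alpha> + \<beta>) * P2 + 2 * m * E2))
          + (M1 - M2) * ((2 - 2 * (\<alpha> - \<beta>) * M1 - 2 * m * E1) - (2 - 2 * (\<alpha> - \<beta>) * M2 - 2 * m * E2))
          + (E1 - E2) * ((2 - 2 * \<alpha> * E1 - m * E1^2 / M1 + m * E1^2 / P1) - (2 - 2 * \<alpha> * E2 - m * E2^2 / M2 + m * E2^2 / P2)))
        \<le> 6 * C * ((P1 - P2)^2 + (M1 - M2)^2 + (E1 - E2)^2)"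
proof -
  define u where "u = P1 - P2"
  define v where "v = M1 - M2"
  define w where "w = E1 - E2"
  define k1 where "k1 = (E1 + E2) / M1"
  define k2 where "k2 = E2^2 / (M1 * M2)"
  define k3 where "k3 = (E1 + E2) / P1"
  define k4 where "k4 = E2^2 / (P1 * P2)"
  have nz: "M1 \<noteq> 0" "M2 \<noteq> 0" "P1 \<noteq> 0" "P2 \<noteq> 0" using d P M by auto
  have rb: "\<bar>k1\<bar> \<le> 2 * B / \<delta>" "\<bar>k2\<bar> \<le> B^2 / \<delta>^2" "\<bar>k3\<bar> \<le> 2 * B / \<delta>" "\<bar>k4\<bar> \<le> B^2 / \<delta>^2"
    using ratio_bounds[OF d E M] ratio_bounds[OF d E P] by (simp_all add: k1_def k2_def k3_def k4_def)
  have eE: "(2 - 2 * \<alpha> * E1 - m * E1^2 / M1 + m * E1^2 / P1) - (2 - 2 * \<alpha> * E2 - m * E2^2 / M2 + m * E2^2 / P2)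
      = - 2 * \<alpha> * w - m * (E1^2 / M1 - E2^2 / M2) + m * (E1^2 / P1 - E2^2 / P2)"
    by (simp add: w_def algebra_simps)
  also have "\<dots> = - 2 * \<alpha> * w - m * (k1 * w - k2 * v) + m * (k3 * w - k4 * u)"
    unfolding sq_ratio_diff[OF nz(1,2)] sq_ratio_diff[OF nz(3,4)] k1_def k2_def k3_def k4_def u_def v_def w_def ..
  finally have eE' : "(2 - 2 * \<alpha> * E1 - m * E1^2 / M1 + m * E1^2 / P1) - (2 - 2 * \<alpha> * E2 - m * E2^2 / M2 + m * E2^2 / P2)
      = - 2 * \<alpha> * w - m * (k1 * w - k2 * v) + m * (k3 * w - k4 * u)" .
  have LHS: "2 * ((P1 - P2) * ((2 - 2 * (\<alpha> + \<beta>) * P1 + 2 * m * E1) - (2 - 2 * (\<alpha> + \<beta>) * P2 + 2 * m * E2))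
          + (M1 - M2) * ((2 - 2 * (\<alpha> - \<beta>) * M1 - 2 * m * E1) - (2 - 2 * (\<alpha> - \<beta>) * M2 - 2 * m * E2))
          + (E1 - E2) * ((2 - 2 * \<alpha> * E1 - m * E1^2 / M1 + m * E1^2 / P1) - (2 - 2 * \<alpha> * E2 - m * E2^2 / M2 + m * E2^2 / P2)))
     = 2 * ((- 2 * (\<alpha> + \<beta>)) * u * u + (2 * m) * u * w + (- 2 * (\<alpha> - \<beta>)) * v * v + (- 2 * m) * v * w
        + (- 2 * \<alpha> - m * k1 + m * k3) * w * w + (m * k2) * w * v + (- m * k4) * w * u)"
    unfolding eE' by (simp add: u_def v_def w_def algebra_simps)
  have Cge: "2 * \<bar>\<alpha>\<bar> + 2 * \<bar>\<beta>\<bar> \<le> C" "2 * \<bar>m\<bar> \<le> C" "2 * \<bar>\<alpha>\<bar> + \<bar>m\<bar> * (4 * B / \<delta>) \<le> C"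
     "\<bar>m\<bar> * (B^2 / \<delta>^2) \<le> C"
    using d B by (auto simp: C_def)
  have c1: "\<bar>- 2 * (\<alpha> + \<beta>)\<bar> \<le> C" "\<bar>- 2 * (\<alpha> - \<beta>)\<bar> \<le> C" using Cge(1) abs_triangle_ineq[of \<alpha> \<beta>] abs_triangle_ineq4[of \<alpha> \<beta>] by (auto simp: abs_mult)
  have c2: "\<bar>2 * m\<bar> \<le> C" "\<bar>- 2 * m\<bar> \<le> C" using Cge(2) by (simp_all add: abs_mult)
  have c5: "\<bar>- 2 * \<alpha> - m * k1 + m * k3\<bar> \<le> C"
  proof -
    have "\<bar>m * k1\<bar> \<le> \<bar>m\<bar> * (2 * B / \<delta>)" "\<bar>m * k3\<bar> \<le> \<bar>m\<bar> * (2 * B / \<delta>)"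
      unfolding abs_mult by (rule mult_left_mono[OF rb(1)], simp, rule mult_left_mono[OF rb(3)], simp)
    moreover have "\<bar>m\<bar> * (4 * B / \<delta>) = 2 * (\<bar>m\<bar> * (2 * B / \<delta>))" by simp
    ultimately have X: "m * k1 \<le> \<bar>m\<bar> * (2 * B / \<delta>)" "- (m * k1) \<le> \<bar>m\<bar> * (2 * B / \<delta>)"
       "m * k3 \<le> \<bar>m\<bar> * (2 * B / \<delta>)" "- (m * k3) \<le> \<bar>m\<bar> * (2 * B / \<delta>)"
       "\<bar>m\<bar> * (4 * B / \<delta>) = 2 * (\<bar>m\<bar> * (2 * B / \<delta>))"
      by (auto dest: abs_le_D1 abs_le_D2)
    have "- 2 * \<alpha> - m * k1 + m * k3 \<le> C" "- (- 2 * \<alpha> - m * k1 + m * k3) \<le> C"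
      using X Cge(3) abs_ge_self[of \<alpha>] abs_ge_minus_self[of \<alpha>] by (smt (verit))+
    then show ?thesis by (simp add: abs_le_iff)
  qed
  have c6: "\<bar>m * k2\<bar> \<le> C" "\<bar>- m * k4\<bar> \<le> C"
  proof -
    have "\<bar>m * k2\<bar> \<le> \<bar>m\<bar> * (B^2 / \<delta>^2)" "\<bar>m * k4\<bar> \<le> \<bar>m\<bar> * (B^2 / \<delta>^2)"
      unfolding abs_mult by (rule mult_left_mono[OF rb(2)], simp, rule mult_left_mono[OF rb(4)], simp)
    then show "\<bar>m * k2\<bar> \<le> C" "\<bar>- m * k4\<bar> \<le> C" using Cge(4) by simp_all
  qed
  have ineqs:
    "(- 2 * (\<alpha> + \<beta>)) * u * u \<le> C * (u^2 + u^2) / 2"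
    "(2 * m) * u * w \<le> C * (u^2 + w^2) / 2"
    "(- 2 * (\<alpha> - \<beta>)) * v * v \<le> C * (v^2 + v^2) / 2"
    "(- 2 * m) * v * w \<le> C * (v^2 + w^2) / 2"
    "(- 2 * \<alpha> - m * k1 + m * k3) * w * w \<le> C * (w^2 + w^2) / 2"
    "(m * k2) * w * v \<le> C * (w^2 + v^2) / 2"
    "(- m * k4) * w * u \<le> C * (w^2 + u^2) / 2"
    by (rule cuv[OF c1(1)], rule cuv[OF c2(1)], rule cuv[OF c1(2)], rule cuv[OF c2(2)],
        rule cuv[OF c5], rule cuv[OF c6(1)], rule cuv[OF c6(2)])
  have "C \<ge> 0" using c2 abs_ge_zero order_trans by blast
  have "2 * ((- 2 * (\<alpha> + \<beta>)) * u * u + (2 * m) * u * w + (- 2 * (\<alpha> - \<beta>)) * v * v + (- 2 * m) * v * w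
        + (- 2 * \<alpha> - m * k1 + m * k3) * w * w + (m * k2) * w * v + (- m * k4) * w * u)
      \<le> 2 * (C * (2 * u^2 + 2 * v^2 + 3 * w^2))"
    using ineqs by (simp add: field_simps power2_eq_square)
  also have "\<dots> \<le> 6 * C * (u^2 + v^2 + w^2)"
    using \<open>C \<ge> 0\<close> by (simp add: algebra_simps mult_left_mono)
  finally show ?thesis unfolding LHS u_def v_def w_def .
qed

lemma gronwall_local:
  fixes D D' :: "real \<Rightarrow> real" and C t1 t2 :: real
  assumes le: "t1 \<le> t2"
    and dD: "\<And>t. t \<in> {t1..t2} \<Longrightarrow> (D has_real_derivative D' t) (at t within {t1..t2})"
    and ineq: "\<And>t. t \<in> {t1..t2} \<Longrightarrow> D' t \<le> C * D t"
    and z: "D t1 = 0" and nn: "\<And>t. t \<in> {t1..t2} \<Longrightarrow> D t \<ge> 0"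
    and t: "t \<in> {t1..t2}"
  shows "D t = 0"
proof -
  define g where "g s = D s * exp (- C * s)" for s
  define g' where "g' s = D' s * exp (- C * s) - C * D s * exp (- C * s)" for s
  have tt: "t1 \<le> t" "t \<le> t2" using t by auto
  have gd: "(g has_derivative (*) (g' s)) (at s within {t1..t})" if "t1 \<le> s" "s \<le> t" for s
  proof -
    have s: "s \<in> {t1..t2}" using that tt by auto
    have "(D has_real_derivative D' s) (at s within {t1..t})"
      by (rule DERIV_subset[OF dD[OF s]]) (use tt in auto)
    then have "(g has_real_derivative g' s) (at s within {t1..t})"
      unfolding g_def[abs_def] g'_def by (auto intro!: derivative_eq_intros simp: algebra_simps)
    then show ?thesis by (simp add: has_field_derivative_def)
  qed
  obtain \<xi> where \<xi>: "\<xi> \<in> {t1..t}" "g t - g t1 = g' \<xi> * (t - t1)"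
    using mvt_very_simple[OF tt(1) gd] by blast
  have "g' \<xi> \<le> 0"
  proof -
    have "\<xi> \<in> {t1..t2}" using \<xi> tt by auto
    then have "D' \<xi> - C * D \<xi> \<le> 0" using ineq by simp
    then have "(D' \<xi> - C * D \<xi>) * exp (- C * \<xi>) \<le> 0" by (simp add: mult_nonpos_nonneg)
    then show ?thesis by (simp add: g'_def algebra_simps)
  qed
  then have "g' \<xi> * (t - t1) \<le> 0" using tt by (simp add: mult_nonpos_nonneg)
  then have "g t \<le> g t1" using \<xi>(2) by linarith
  then have "D t * exp (- C * t) \<le> 0" using z by (simp add: g_def)
  then have "D t \<le> 0" by (simp add: mult_le_0_iff)
  then show ?thesis using nn[OF t] by simp
qed

lemma ev_gt: "(f has_real_derivative f') (at t within S) \<Longrightarrow> a < f t \<Longrightarrow> eventually (\<lambda>s. a < f s) (at t within S)"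
  by (drule DERIV_continuous) (auto simp: continuous_within intro: order_tendstoD(1))
lemma ev_lt: "(f has_real_derivative f') (at t within S) \<Longrightarrow> f t < a \<Longrightarrow> eventually (\<lambda>s. f s < a) (at t within S)"
  by (drule DERIV_continuous) (auto simp: continuous_within intro: order_tendstoD(2))

lemma uniq_core:
  fixes PA MA EA PB MB EB PA' MA' EA' PB' MB' EB' :: "real \<Rightarrow> real" and \<alpha> \<beta> m :: real
  assumes dP1: "\<And>t. t \<ge> 0 \<Longrightarrow> (PA has_real_derivative PA' t) (at t within {0..})"
    and dM1: "\<And>t. t \<ge> 0 \<Longrightarrow> (MA has_real_derivative MA' t) (at t within {0..})"
    and dE1: "\<And>t. t \<ge> 0 \<Longrightarrow> (EA has_real_derivative EA' t) (at t within {0..})"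
    and dP2: "\<And>t. t \<ge> 0 \<Longrightarrow> (PB has_real_derivative PB' t) (at t within {0..})"
    and dM2: "\<And>t. t \<ge> 0 \<Longrightarrow> (MB has_real_derivative MB' t) (at t within {0..})"
    and dE2: "\<And>t. t \<ge> 0 \<Longrightarrow> (EB has_real_derivative EB' t) (at t within {0..})"
    and r1: "\<And>t. t \<ge> 0 \<Longrightarrow> PA t \<noteq> 0 \<Longrightarrow> MA t \<noteq> 0 \<Longrightarrow>
       PA' t = 2 - 2 * (\<alpha> + \<beta>) * PA t + 2 * m * EA t \<and> MA' t = 2 - 2 * (\<alpha> - \<beta>) * MA t - 2 * m * EA t \<and>
       EA' t = 2 - 2 * \<alpha> * EA t - m * (EA t)^2 / MA t + m * (EA t)^2 / PA t"
    and r2: "\<And>t. t \<ge> 0 \<Longrightarrow> PB t \<noteq> 0 \<Longrightarrow> MB t \<noteq> 0 \<Longrightarrow>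
       PB' t = 2 - 2 * (\<alpha> + \<beta>) * PB t + 2 * m * EB t \<and> MB' t = 2 - 2 * (\<alpha> - \<beta>) * MB t - 2 * m * EB t \<and>
       EB' t = 2 - 2 * \<alpha> * EB t - m * (EB t)^2 / MB t + m * (EB t)^2 / PB t"
    and init: "PA 0 = PB 0" "MA 0 = MB 0" "EA 0 = EB 0"
    and pos: "\<And>t. t \<ge> 0 \<Longrightarrow> PA t > 0 \<and> MA t > 0"
    and t: "t \<ge> 0"
  shows "PA t = PB t \<and> MA t = MB t \<and> EA t = EB t"
proof -
  define D where "D s = (PA s - PB s) * (PA s - PB s) + (MA s - MB s) * (MA s - MB s) + (EA s - EB s) * (EA s - EB s)" for s
  define D' where "D' s = 2 * ((PA s - PB s) * (PA' s - PB' s) + (MA s - MB s) * (MA' s - MB' s) + (EA s - EB s) * (EA' s - EB' s))" for s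
  have dD: "(D has_real_derivative D' s) (at s within {0..})" if "s \<ge> 0" for s
    unfolding D_def[abs_def]
    by (rule derivative_eq_intros dP1 dM1 dE1 dP2 dM2 dE2 that refl)+ (simp add: D'_def algebra_simps)
  have Dnn: "D s \<ge> 0" for s by (simp add: D_def)
  have Deq: "D s = 0 \<longleftrightarrow> PA s = PB s \<and> MA s = MB s \<and> EA s = EB s" for s
  proof -
    have "D s = (PA s - PB s)^2 + (MA s - MB s)^2 + (EA s - EB s)^2" by (simp add: D_def power2_eq_square)
    then show ?thesis by (simp add: add_nonneg_eq_0_iff)
  qed
  have "\<forall>s\<ge>0. D s = 0"
  proof (rule ccontr)
    assume "\<not> (\<forall>s\<ge>0. D s = 0)"
    define S where "S = {s. s \<ge> 0 \<and> D s \<noteq> 0}"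
    have Sne: "S \<noteq> {}" using \<open>\<not> (\<forall>s\<ge>0. D s = 0)\<close> by (auto simp: S_def)
    have Sbd: "bdd_below S" by (auto simp: S_def intro!: bdd_belowI[of _ 0])
    define t1 where "t1 = Inf S"
    have t10: "t1 \<ge> 0" unfolding t1_def by (rule cInf_greatest[OF Sne]) (auto simp: S_def)
    have below: "D s = 0" if "0 \<le> s" "s < t1" for s
    proof (rule ccontr)
      assume "D s \<noteq> 0"
      then have "s \<in> S" using that by (simp add: S_def)
      then have "t1 \<le> s" unfolding t1_def by (rule cInf_lower[OF _ Sbd])
      then show False using that by simp
    qed
    have Dt1: "D t1 = 0"
    proof (cases "t1 = 0")
      case True then show ?thesis using init Deq by simp
    next
      case False
      then have t1p: "t1 > 0" using t10 by simp
      show ?thesis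
      proof (rule ccontr)
        assume "D t1 \<noteq> 0"
        then have "0 < D t1" using Dnn[of t1] by simp
        from ev_gt[OF dD[OF t10] this] obtain dl where dl: "dl > 0"
          "\<And>s. s \<in> {0..} \<Longrightarrow> s \<noteq> t1 \<Longrightarrow> dist s t1 < dl \<Longrightarrow> 0 < D s"
          unfolding eventually_at by blast
        define s where "s = max (t1 / 2) (t1 - dl / 2)"
        have s: "0 \<le> s" "s < t1" "dist s t1 < dl" using t1p dl(1) by (auto simp: s_def dist_real_def)
        then have "0 < D s" using dl(2)[of s] by simp
        then show False using below[OF s(1,2)] by simp
      qed
    qed
    then have eq1: "PB t1 = PA t1" "MB t1 = MA t1" "EB t1 = EA t1" using Deq by auto
    have p1: "PA t1 > 0" "MA t1 > 0" using pos[OF t10] by auto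
    define \<delta> where "\<delta> = min (PA t1) (MA t1) / 2"
    define B where "B = \<bar>EA t1\<bar> + 1"
    have \<delta>: "\<delta> > 0" "\<delta> < PA t1" "\<delta> < MA t1" using p1 by (auto simp: \<delta>_def)
    have B: "B > 0" "\<bar>EA t1\<bar> < B" by (auto simp: B_def)
    have "eventually (\<lambda>s. \<delta> < PA s \<and> \<delta> < PB s \<and> \<delta> < MA s \<and> \<delta> < MB s \<and>
        - B < EA s \<and> EA s < B \<and> - B < EB s \<and> EB s < B) (at t1 within {0..})"
      using \<delta> B eq1
      by (intro eventually_conj ev_gt[OF dP1[OF t10]] ev_gt[OF dP2[OF t10]] ev_gt[OF dM1[OF t10]] ev_gt[OF dM2[OF t10]]
          ev_gt[OF dE1[OF t10]] ev_lt[OF dE1[OF t10]] ev_gt[OF dE2[OF t10]] ev_lt[OF dE2[OF t10]]) (auto simp: abs_less_iff)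
    then obtain dl where dl: "dl > 0" and
      dlP: "\<And>s. s \<in> {0..} \<Longrightarrow> s \<noteq> t1 \<Longrightarrow> dist s t1 < dl \<Longrightarrow> \<delta> < PA s \<and> \<delta> < PB s \<and> \<delta> < MA s \<and> \<delta> < MB s \<and>
        - B < EA s \<and> EA s < B \<and> - B < EB s \<and> EB s < B"
      unfolding eventually_at by blast
    define h where "h = dl / 2"
    have h: "h > 0" using dl by (simp add: h_def)
    have bnd: "\<delta> \<le> PA s \<and> \<delta> \<le> PB s \<and> \<delta> \<le> MA s \<and> \<delta> \<le> MB s \<and> \<bar>EA s\<bar> < B \<and> \<bar>EB s\<bar> < B"
      if "s \<in> {t1..t1+h}" for s
    proof (cases "s = t1")
      case True then show ?thesis using \<delta> B eq1 by auto
    next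
      case False
      have "s \<in> {0..}" "dist s t1 < dl" using that t10 dl by (auto simp: h_def dist_real_def)
      then show ?thesis using dlP[of s] False by (auto simp: abs_less_iff)
    qed
    define C where "C = 2 * \<bar>\<alpha>\<bar> + 2 * \<bar>\<beta>\<bar> + 2 * \<bar>m\<bar> + \<bar>m\<bar> * (4 * B / \<delta>) + \<bar>m\<bar> * (B^2 / \<delta>^2)"
    have Dzero: "D s = 0" if "s \<in> {t1..t1+h}" for s
    proof (rule gronwall_local[of t1 "t1 + h" D D' "6 * C"])
      show "t1 \<le> t1 + h" using h by simp
      show "(D has_real_derivative D' s) (at s within {t1..t1 + h})" if "s \<in> {t1..t1 + h}" for s
        by (rule DERIV_subset[OF dD]) (use that t10 in auto)
      show "D' s \<le> 6 * C * D s" if s: "s \<in> {t1..t1 + h}" for s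
      proof -
        have s0: "s \<ge> 0" using s t10 by auto
        have b: "\<delta> \<le> PA s" "\<delta> \<le> PB s" "\<delta> \<le> MA s" "\<delta> \<le> MB s" "\<bar>EA s\<bar> < B" "\<bar>EB s\<bar> < B" using bnd[OF s] by auto
        have nz: "PA s \<noteq> 0" "MA s \<noteq> 0" "PB s \<noteq> 0" "MB s \<noteq> 0" using b \<delta> by auto
        note R1 = r1[OF s0 nz(1,2)] and R2 = r2[OF s0 nz(3,4)]
        have "D' s = 2 * ((PA s - PB s) * ((2 - 2 * (\<alpha> + \<beta>) * PA s + 2 * m * EA s) - (2 - 2 * (\<alpha> + \<beta>) * PB s + 2 * m * EB s))
          + (MA s - MB s) * ((2 - 2 * (\<alpha> - \<beta>) * MA s - 2 * m * EA s) - (2 - 2 * (\<alpha> - \<beta>) * MB s - 2 * m * EB s))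
          + (EA s - EB s) * ((2 - 2 * \<alpha> * EA s - m * (EA s)^2 / MA s + m * (EA s)^2 / PA s) - (2 - 2 * \<alpha> * EB s - m * (EB s)^2 / MB s + m * (EB s)^2 / PB s)))"
          unfolding D'_def using R1 R2 by simp
        also have "\<dots> \<le> 6 * C * ((PA s - PB s)^2 + (MA s - MB s)^2 + (EA s - EB s)^2)"
          unfolding C_def by (rule quad_ineq[OF \<delta>(1) B(1) b])
        also have "\<dots> = 6 * C * D s" by (simp add: D_def power2_eq_square)
        finally show ?thesis .
      qed
    qed (use Dt1 Dnn that in auto)
    have "t1 + h \<le> Inf S"
    proof (rule cInf_greatest[OF Sne])
      fix s assume sS: "s \<in> S"
      then have "t1 \<le> s" unfolding t1_def by (rule cInf_lower[OF _ Sbd])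
      moreover have "D s \<noteq> 0" using sS by (simp add: S_def)
      ultimately show "t1 + h \<le> s" using Dzero[of s] by force
    qed
    then show False using h by (simp add: t1_def)
  qed
  then show ?thesis using t Deq by blast
qed

lemma scrM_abc:
  assumes k: "\<kappa> \<ge> 2" and A: "in_scrM \<kappa> A"
  shows "mat_eq_on \<kappa> A (matM \<kappa> (A 0 0) (A 0 1) (A 1 2))"
proof -
  obtain a b c where abc: "mat_eq_on \<kappa> A (matM \<kappa> a b c)" using A by (auto simp: in_scrM_def)
  have "A 0 0 = a" "A 0 1 = b" "A 1 2 = c" using abc k by (auto simp: mat_eq_on_def matM_def)
  then show ?thesis using abc by simp
qed

lemma sp_deriv:
  fixes x z :: "real \<Rightarrow> real"
  assumes dx: "(x has_real_derivative x t * hx) (at t within S)" and dz: "(z has_real_derivative z t * hz) (at t within S)"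
    and nz: "x t \<noteq> 0" "z t \<noteq> 0"
  shows "((\<lambda>s. 1 / (x s * z s)) has_real_derivative - (hx + hz) / (x t * z t)) (at t within S)"
  using nz by (auto intro!: derivative_eq_intros dx dz simp: field_simps power2_eq_square)

lemma e_deriv:
  fixes z :: "real \<Rightarrow> real"
  assumes dz: "(z has_real_derivative z t * hz) (at t within S)" and nz: "z t \<noteq> 0"
  shows "((\<lambda>s. 1 / z s) has_real_derivative - hz / z t) (at t within S)"
  using nz by (auto intro!: derivative_eq_intros dz simp: field_simps power2_eq_square)

lemma exists_sol:
  fixes \<kappa> :: nat and \<alpha> \<beta> a0 b0 c0 :: real
  assumes k: "\<kappa> \<ge> 2" and p0: "a0 + b0 > 0" "a0 - b0 > 0" "a0 - c0 > 0"
    and det0: "a0 * (a0 + (real \<kappa> - 1) * c0) > real \<kappa> * b0^2"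
  shows "\<exists>a b c :: real \<Rightarrow> real. a 0 = a0 \<and> b 0 = b0 \<and> c 0 = c0 \<and> (\<forall>t\<ge>0.
     a t + b t > 0 \<and> a t - b t > 0 \<and> a t - c t > 0 \<and> a t * (a t + (real \<kappa> - 1) * c t) > real \<kappa> * (b t)^2 \<and>
     (a has_real_derivative Fa \<alpha> \<beta> (a t) (b t)) (at t within {0..}) \<and>
     (b has_real_derivative Fb \<kappa> \<alpha> \<beta> (a t) (b t) (c t)) (at t within {0..}) \<and>
     (c has_real_derivative Fc \<kappa> \<alpha> \<beta> (a t) (b t) (c t)) (at t within {0..}))"
proof -
  define n where "n = real \<kappa>"
  have n: "n \<ge> 2" using k by (simp add: n_def)
  define m where "m = mm \<kappa> \<beta>"
  define K where "K = 2 * n / (n - 1)"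
  have K2: "K > 2" using n by (simp add: K_def field_simps)
  have mK: "2 * \<beta> = m * K" using n by (simp add: m_def mm_def K_def n_def[symmetric] field_simps)
  define sp0 where "sp0 = a0 + b0"
  define sm0 where "sm0 = a0 - b0"
  define e0 where "e0 = a0 - c0"
  have pos0: "sp0 > 0" "sm0 > 0" "e0 > 0" using p0 by (auto simp: sp0_def sm0_def e0_def)
  define x0 where "x0 = e0 / sp0"
  define y0 where "y0 = e0 / sm0"
  define z0 where "z0 = 1 / e0"
  have xyz0: "x0 > 0" "y0 > 0" "z0 > 0" using pos0 by (auto simp: x0_def y0_def z0_def)
  have "x0 + y0 < K"
  proof -
    have "(n - 1) * e0 * a0 < n * (a0^2 - b0^2)"
      using det0 unfolding e0_def n_def[symmetric] by (simp add: algebra_simps power2_eq_square)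
    then have "(n - 1) * e0 * (sp0 + sm0) < 2 * n * (sp0 * sm0)"
      by (simp add: sp0_def sm0_def algebra_simps power2_eq_square)
    then show ?thesis using pos0 n
      by (simp add: x0_def y0_def K_def field_simps)
  qed
  then obtain x y z where x0: "x 0 = x0" and y0: "y 0 = y0" and z0: "z 0 = z0" and
    X: "\<And>t. t \<ge> 0 \<Longrightarrow> 0 < x t \<and> 0 < y t \<and> 0 < z t \<and> x t + y t < K \<and>
     (x has_real_derivative x t * (2 * z t * (1 - x t) + 2 * \<beta> - m * (x t + y t))) (at t within {0..}) \<and>
     (y has_real_derivative y t * (2 * z t * (1 - y t) - 2 * \<beta> + m * (x t + y t))) (at t within {0..}) \<and>
     (z has_real_derivative z t * (- 2 * z t + 2 * \<alpha> + m * (y t - x t))) (at t within {0..})"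
    using xyz_exists[OF K2 mK xyz0] by blast
  define sp where "sp s = 1 / (x s * z s)" for s
  define sm where "sm s = 1 / (y s * z s)" for s
  define e where "e s = 1 / z s" for s
  define a where "a s = (sp s + sm s) / 2" for s
  define b where "b s = (sp s - sm s) / 2" for s
  define c where "c s = a s - e s" for s
  have ab: "a s + b s = sp s" "a s - b s = sm s" "a s - c s = e s" for s by (simp_all add: a_def b_def c_def field_simps)
  have init: "sp 0 = sp0" "sm 0 = sm0" "e 0 = e0"
    using pos0 by (simp_all add: sp_def sm_def e_def x0 y0 z0 x0_def y0_def z0_def)
  show ?thesis
  proof (intro exI conjI allI impI)
    show "a 0 = a0" "b 0 = b0" "c 0 = c0"
      using init by (simp_all add: a_def b_def c_def sp0_def sm0_def e0_def)
    fix t :: real assume t: "t \<ge> 0"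
    note Xt = X[OF t]
    have xp: "x t > 0" "y t > 0" "z t > 0" "x t + y t < K" using Xt by auto
    have spp: "sp t > 0" "sm t > 0" "e t > 0" using xp by (simp_all add: sp_def sm_def e_def)
    show "a t + b t > 0" "a t - b t > 0" "a t - c t > 0" using spp ab by simp_all
    show "a t * (a t + (real \<kappa> - 1) * c t) > real \<kappa> * (b t)^2"
    proof -
      have "(n - 1) * (x t + y t) < 2 * n" using xp n by (simp add: K_def field_simps)
      moreover have "(n - 1) * (sp t + sm t) * e t = ((n - 1) * (x t + y t)) / (x t * y t * (z t)^2)"
        using xp by (simp add: sp_def sm_def e_def field_simps power2_eq_square)
      moreover have "2 * n * (sp t * sm t) = (2 * n) / (x t * y t * (z t)^2)"
        using xp by (simp add: sp_def sm_def field_simps power2_eq_square)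
      moreover have "x t * y t * (z t)^2 > 0" using xp by simp
      ultimately have "(n - 1) * (sp t + sm t) * e t < 2 * n * (sp t * sm t)"
        by (simp add: divide_strict_right_mono)
      then show ?thesis unfolding n_def[symmetric] c_def a_def b_def
        by (simp add: algebra_simps power2_eq_square field_simps)
    qed
    have dsp: "(sp has_real_derivative Gp \<kappa> \<alpha> \<beta> (sp t) (e t)) (at t within {0..})"
    proof -
      have "(sp has_real_derivative
          - ((2 * z t * (1 - x t) + 2 * \<beta> - m * (x t + y t)) + (- 2 * z t + 2 * \<alpha> + m * (y t - x t))) / (x t * z t))
          (at t within {0..})"
        unfolding sp_def[abs_def] by (rule sp_deriv) (use Xt in auto)
      moreover have "- ((2 * z t * (1 - x t) + 2 * \<beta> - m * (x t + y t)) + (- 2 * z t + 2 * \<alpha> + m * (y t - x t))) / (x t * z t)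
          = Gp \<kappa> \<alpha> \<beta> (sp t) (e t)"
        using xp unfolding Gp_def m_def[symmetric] by (simp add: sp_def e_def field_simps)
      ultimately show ?thesis by simp
    qed
    have dsm: "(sm has_real_derivative Gm \<kappa> \<alpha> \<beta> (sm t) (e t)) (at t within {0..})"
    proof -
      have "(sm has_real_derivative
          - ((2 * z t * (1 - y t) - 2 * \<beta> + m * (x t + y t)) + (- 2 * z t + 2 * \<alpha> + m * (y t - x t))) / (y t * z t))
          (at t within {0..})"
        unfolding sm_def[abs_def] by (rule sp_deriv) (use Xt in auto)
      moreover have "- ((2 * z t * (1 - y t) - 2 * \<beta> + m * (x t + y t)) + (- 2 * z t + 2 * \<alpha> + m * (y t - x t))) / (y t * z t)
          = Gm \<kappa> \<alpha> \<beta> (sm t) (e t)"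
        using xp unfolding Gm_def m_def[symmetric] by (simp add: sm_def e_def field_simps)
      ultimately show ?thesis by simp
    qed
    have de: "(e has_real_derivative Ge \<kappa> \<alpha> \<beta> (sp t) (sm t) (e t)) (at t within {0..})"
    proof -
      have "(e has_real_derivative - (- 2 * z t + 2 * \<alpha> + m * (y t - x t)) / z t) (at t within {0..})"
        unfolding e_def[abs_def] by (rule e_deriv) (use Xt in auto)
      moreover have "- (- 2 * z t + 2 * \<alpha> + m * (y t - x t)) / z t = Ge \<kappa> \<alpha> \<beta> (sp t) (sm t) (e t)"
        using xp unfolding Ge_def m_def[symmetric] by (simp add: sp_def sm_def e_def field_simps power2_eq_square)
      ultimately show ?thesis by simp
    qed
    have k0: "\<kappa> > 0" using k by simp
    have I: "Fa \<alpha> \<beta> (a t) (b t) + Fb \<kappa> \<alpha> \<beta> (a t) (b t) (c t) = Gp \<kappa> \<alpha> \<beta> (sp t) (e t)"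
      "Fa \<alpha> \<beta> (a t) (b t) - Fb \<kappa> \<alpha> \<beta> (a t) (b t) (c t) = Gm \<kappa> \<alpha> \<beta> (sm t) (e t)"
      "Fa \<alpha> \<beta> (a t) (b t) - Fc \<kappa> \<alpha> \<beta> (a t) (b t) (c t) = Ge \<kappa> \<alpha> \<beta> (sp t) (sm t) (e t)"
    proof -
      have nz: "a t + b t \<noteq> 0" "a t - b t \<noteq> 0" using ab spp by auto
      show "Fa \<alpha> \<beta> (a t) (b t) + Fb \<kappa> \<alpha> \<beta> (a t) (b t) (c t) = Gp \<kappa> \<alpha> \<beta> (sp t) (e t)"
        using ident_p[OF k0] ab by metis
      show "Fa \<alpha> \<beta> (a t) (b t) - Fb \<kappa> \<alpha> \<beta> (a t) (b t) (c t) = Gm \<kappa> \<alpha> \<beta> (sm t) (e t)"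
        using ident_m[OF k0] ab by metis
      show "Fa \<alpha> \<beta> (a t) (b t) - Fc \<kappa> \<alpha> \<beta> (a t) (b t) (c t) = Ge \<kappa> \<alpha> \<beta> (sp t) (sm t) (e t)"
        using ident_e[OF nz k0, of \<alpha> \<beta>] ab by metis
    qed
    have da: "(a has_real_derivative Fa \<alpha> \<beta> (a t) (b t)) (at t within {0..})"
    proof -
      have "(a has_real_derivative (Gp \<kappa> \<alpha> \<beta> (sp t) (e t) + Gm \<kappa> \<alpha> \<beta> (sm t) (e t)) / 2) (at t within {0..})"
        unfolding a_def[abs_def] by (rule derivative_eq_intros dsp dsm refl | simp)+
      moreover have "(Gp \<kappa> \<alpha> \<beta> (sp t) (e t) + Gm \<kappa> \<alpha> \<beta> (sm t) (e t)) / 2 = Fa \<alpha> \<beta> (a t) (b t)"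
        unfolding I(1,2)[symmetric] by simp
      ultimately show ?thesis by simp
    qed
    show "(a has_real_derivative Fa \<alpha> \<beta> (a t) (b t)) (at t within {0..})" by (rule da)
    show "(b has_real_derivative Fb \<kappa> \<alpha> \<beta> (a t) (b t) (c t)) (at t within {0..})"
    proof -
      have "(b has_real_derivative (Gp \<kappa> \<alpha> \<beta> (sp t) (e t) - Gm \<kappa> \<alpha> \<beta> (sm t) (e t)) / 2) (at t within {0..})"
        unfolding b_def[abs_def] by (rule derivative_eq_intros dsp dsm refl | simp)+
      moreover have "(Gp \<kappa> \<alpha> \<beta> (sp t) (e t) - Gm \<kappa> \<alpha> \<beta> (sm t) (e t)) / 2 = Fb \<kappa> \<alpha> \<beta> (a t) (b t) (c t)"
        unfolding I(1,2)[symmetric] by simp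
      ultimately show ?thesis by simp
    qed
    show "(c has_real_derivative Fc \<kappa> \<alpha> \<beta> (a t) (b t) (c t)) (at t within {0..})"
    proof -
      have "(c has_real_derivative Fa \<alpha> \<beta> (a t) (b t) - Ge \<kappa> \<alpha> \<beta> (sp t) (sm t) (e t)) (at t within {0..})"
        unfolding c_def[abs_def] by (rule derivative_eq_intros da de refl | simp)+
      moreover have "Fa \<alpha> \<beta> (a t) (b t) - Ge \<kappa> \<alpha> \<beta> (sp t) (sm t) (e t) = Fc \<kappa> \<alpha> \<beta> (a t) (b t) (c t)"
        unfolding I(3)[symmetric] by simp
      ultimately show ?thesis by simp
    qed
  qed
qed

lemma sol_props:
  assumes k: "\<kappa> \<ge> 2" and W: "is_global_solution \<kappa> \<alpha> \<beta> S W" and t: "t \<ge> 0"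
  shows "((\<lambda>s. W s 0 0 + W s 0 1) has_real_derivative matF \<kappa> \<alpha> \<beta> (W t) 0 0 + matF \<kappa> \<alpha> \<beta> (W t) 0 1) (at t within {0..})"
    "((\<lambda>s. W s 0 0 - W s 0 1) has_real_derivative matF \<kappa> \<alpha> \<beta> (W t) 0 0 - matF \<kappa> \<alpha> \<beta> (W t) 0 1) (at t within {0..})"
    "((\<lambda>s. W s 0 0 - W s 1 2) has_real_derivative matF \<kappa> \<alpha> \<beta> (W t) 0 0 - matF \<kappa> \<alpha> \<beta> (W t) 1 2) (at t within {0..})"
    "W t 0 0 + W t 0 1 \<noteq> 0 \<Longrightarrow> W t 0 0 - W t 0 1 \<noteq> 0 \<Longrightarrow>
       matF \<kappa> \<alpha> \<beta> (W t) 0 0 + matF \<kappa> \<alpha> \<beta> (W t) 0 1 = 2 - 2 * (\<alpha> + \<beta>) * (W t 0 0 + W t 0 1) + 2 * mm \<kappa> \<beta> * (W t 0 0 - W t 1 2) \<and>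
       matF \<kappa> \<alpha> \<beta> (W t) 0 0 - matF \<kappa> \<alpha> \<beta> (W t) 0 1 = 2 - 2 * (\<alpha> - \<beta>) * (W t 0 0 - W t 0 1) - 2 * mm \<kappa> \<beta> * (W t 0 0 - W t 1 2) \<and>
       matF \<kappa> \<alpha> \<beta> (W t) 0 0 - matF \<kappa> \<alpha> \<beta> (W t) 1 2 = 2 - 2 * \<alpha> * (W t 0 0 - W t 1 2)
          - mm \<kappa> \<beta> * (W t 0 0 - W t 1 2)^2 / (W t 0 0 - W t 0 1) + mm \<kappa> \<beta> * (W t 0 0 - W t 1 2)^2 / (W t 0 0 + W t 0 1)"
proof -
  have D: "((\<lambda>s. W s i j) has_real_derivative matF \<kappa> \<alpha> \<beta> (W t) i j) (at t within {0..})" if "i \<le> \<kappa>" "j \<le> \<kappa>" for i j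
    using W t that unfolding is_global_solution_def by blast
  have k12: "0 \<le> \<kappa>" "1 \<le> \<kappa>" "2 \<le> \<kappa>" using k by auto
  note D00 = D[OF k12(1) k12(1)] and D01 = D[OF k12(1) k12(2)] and D12 = D[OF k12(2) k12(3)]
  show "((\<lambda>s. W s 0 0 + W s 0 1) has_real_derivative matF \<kappa> \<alpha> \<beta> (W t) 0 0 + matF \<kappa> \<alpha> \<beta> (W t) 0 1) (at t within {0..})"
    by (rule DERIV_add[OF D00 D01])
  show "((\<lambda>s. W s 0 0 - W s 0 1) has_real_derivative matF \<kappa> \<alpha> \<beta> (W t) 0 0 - matF \<kappa> \<alpha> \<beta> (W t) 0 1) (at t within {0..})"
    by (rule DERIV_diff[OF D00 D01])
  show "((\<lambda>s. W s 0 0 - W s 1 2) has_real_derivative matF \<kappa> \<alpha> \<beta> (W t) 0 0 - matF \<kappa> \<alpha> \<beta> (W t) 1 2) (at t within {0..})"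
    by (rule DERIV_diff[OF D00 D12])
  assume nz: "W t 0 0 + W t 0 1 \<noteq> 0" "W t 0 0 - W t 0 1 \<noteq> 0"
  define a where "a = W t 0 0"
  define b where "b = W t 0 1"
  define c where "c = W t 1 2"
  have sc: "in_scrM \<kappa> (W t)" using W t unfolding is_global_solution_def by blast
  have A: "mat_eq_on \<kappa> (W t) (matM \<kappa> a b c)" using scrM_abc[OF k sc] by (simp add: a_def b_def c_def)
  have ab: "\<bar>a\<bar> \<noteq> \<bar>b\<bar>" using nz unfolding a_def[symmetric] b_def[symmetric] by (auto simp: abs_eq_iff)
  have F: "mat_eq_on \<kappa> (matF \<kappa> \<alpha> \<beta> (W t)) (matM \<kappa> (Fa \<alpha> \<beta> a b) (Fb \<kappa> \<alpha> \<beta> a b c) (Fc \<kappa> \<alpha> \<beta> a b c))"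
    by (rule matF_M[OF k A ab])
  have F3: "matF \<kappa> \<alpha> \<beta> (W t) 0 0 = Fa \<alpha> \<beta> a b" "matF \<kappa> \<alpha> \<beta> (W t) 0 1 = Fb \<kappa> \<alpha> \<beta> a b c"
    "matF \<kappa> \<alpha> \<beta> (W t) 1 2 = Fc \<kappa> \<alpha> \<beta> a b c"
    using F k12 unfolding mat_eq_on_def by (auto simp: matM_def)
  have k0: "\<kappa> > 0" using k by simp
  have nz': "a + b \<noteq> 0" "a - b \<noteq> 0" using nz by (simp_all add: a_def b_def)
  show "matF \<kappa> \<alpha> \<beta> (W t) 0 0 + matF \<kappa> \<alpha> \<beta> (W t) 0 1 = 2 - 2 * (\<alpha> + \<beta>) * (W t 0 0 + W t 0 1) + 2 * mm \<kappa> \<beta> * (W t 0 0 - W t 1 2) \<and>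
       matF \<kappa> \<alpha> \<beta> (W t) 0 0 - matF \<kappa> \<alpha> \<beta> (W t) 0 1 = 2 - 2 * (\<alpha> - \<beta>) * (W t 0 0 - W t 0 1) - 2 * mm \<kappa> \<beta> * (W t 0 0 - W t 1 2) \<and>
       matF \<kappa> \<alpha> \<beta> (W t) 0 0 - matF \<kappa> \<alpha> \<beta> (W t) 1 2 = 2 - 2 * \<alpha> * (W t 0 0 - W t 1 2)
          - mm \<kappa> \<beta> * (W t 0 0 - W t 1 2)^2 / (W t 0 0 - W t 0 1) + mm \<kappa> \<beta> * (W t 0 0 - W t 1 2)^2 / (W t 0 0 + W t 0 1)"
    unfolding F3 a_def[symmetric] b_def[symmetric] c_def[symmetric]
    using ident_p[OF k0, of \<alpha> \<beta> a b c] ident_m[OF k0, of \<alpha> \<beta> a b c] ident_e[OF nz' k0, of \<alpha> \<beta> c]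
    unfolding Gp_def Gm_def Ge_def by simp
qed

theorem lemma4p10:
  fixes \<kappa> :: nat and \<alpha> \<beta> :: real and \<Sigma> :: rmat
  assumes "\<kappa> \<ge> 2" and "in_scrM_pos \<kappa> \<Sigma>"
  shows "\<exists>V. is_global_solution \<kappa> \<alpha> \<beta> \<Sigma> V \<and>
           (\<forall>W. is_global_solution \<kappa> \<alpha> \<beta> \<Sigma> W \<longrightarrow>
                (\<forall>t\<ge>0. mat_eq_on \<kappa> (W t) (V t))) \<and>
           (\<forall>t\<ge>0. in_scrM_pos \<kappa> (V t))"
proof -
  note k = assms(1)
  have sc: "in_scrM \<kappa> \<Sigma>" and pd: "pos_def \<kappa> \<Sigma>" using assms(2) by (auto simp: in_scrM_pos_def)
  define a0 where "a0 = \<Sigma> 0 0"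
  define b0 where "b0 = \<Sigma> 0 1"
  define c0 where "c0 = \<Sigma> 1 2"
  have S0: "mat_eq_on \<kappa> \<Sigma> (matM \<kappa> a0 b0 c0)" using scrM_abc[OF k sc] by (simp add: a0_def b0_def c0_def)
  have pdM: "pos_def \<kappa> (matM \<kappa> a0 b0 c0)" by (rule pos_def_cong[OF S0 pd])
  note inv = pd_M_inv[OF k pdM]
  obtain a b c where abc0: "a 0 = a0" "b 0 = b0" "c 0 = c0" and
    sol: "\<And>t. t \<ge> 0 \<Longrightarrow> a t + b t > 0 \<and> a t - b t > 0 \<and> a t - c t > 0 \<and> a t * (a t + (real \<kappa> - 1) * c t) > real \<kappa> * (b t)^2 \<and>
     (a has_real_derivative Fa \<alpha> \<beta> (a t) (b t)) (at t within {0..}) \<and>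
     (b has_real_derivative Fb \<kappa> \<alpha> \<beta> (a t) (b t) (c t)) (at t within {0..}) \<and>
     (c has_real_derivative Fc \<kappa> \<alpha> \<beta> (a t) (b t) (c t)) (at t within {0..})"
    using exists_sol[OF k inv(2) inv(1) inv(3) inv(4), of \<alpha> \<beta>] by blast
  define V where "V t = matM \<kappa> (a t) (b t) (c t)" for t
  have Vent: "V t 0 0 = a t" "V t 0 1 = b t" "V t 1 2 = c t" for t by (simp_all add: V_def matM_def)
  have Vent': "V t 0 (Suc 0) = b t" "V t (Suc 0) 2 = c t" for t by (simp_all add: V_def matM_def)
  have VG: "is_global_solution \<kappa> \<alpha> \<beta> \<Sigma> V"
    unfolding is_global_solution_def
  proof (intro conjI allI impI)
    fix t :: real assume "t \<ge> 0"
    show "in_scrM \<kappa> (V t)" unfolding in_scrM_def V_def mat_eq_on_def by blast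
  next
    show "mat_eq_on \<kappa> (V 0) \<Sigma>" using S0 abc0 by (simp add: V_def mat_eq_on_def)
  next
    fix t :: real and i j :: nat assume t: "t \<ge> 0" and ij: "i \<le> \<kappa>" "j \<le> \<kappa>"
    note st = sol[OF t]
    have ab: "\<bar>a t\<bar> \<noteq> \<bar>b t\<bar>" using st by (auto simp: abs_if)
    have F: "matF \<kappa> \<alpha> \<beta> (V t) i j = matM \<kappa> (Fa \<alpha> \<beta> (a t) (b t)) (Fb \<kappa> \<alpha> \<beta> (a t) (b t) (c t)) (Fc \<kappa> \<alpha> \<beta> (a t) (b t) (c t)) i j"
    proof -
      have Veq: "mat_eq_on \<kappa> (V t) (matM \<kappa> (a t) (b t) (c t))" by (simp add: V_def mat_eq_on_def)
      show ?thesis using matF_M[OF k Veq ab] ij unfolding mat_eq_on_def by blast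
    qed
    show "((\<lambda>s. V s i j) has_real_derivative matF \<kappa> \<alpha> \<beta> (V t) i j) (at t within {0..})"
    proof (cases "i = j")
      case True
      then have "(\<lambda>s. V s i j) = a" by (simp add: V_def matM_def fun_eq_iff)
      then show ?thesis using st F True by (simp add: matM_def)
    next
      case False
      show ?thesis
      proof (cases "i = 0 \<or> j = 0")
        case True
        then have "(\<lambda>s. V s i j) = b" using False by (auto simp: V_def matM_def fun_eq_iff)
        then show ?thesis using st F True False by (auto simp: matM_def)
      next
        case False2: False
        then have "(\<lambda>s. V s i j) = c" using False by (auto simp: V_def matM_def fun_eq_iff)
        then show ?thesis using st F False2 False by (auto simp: matM_def)
      qed
    qed
  qed
  have PD: "in_scrM_pos \<kappa> (V t)" if t: "t \<ge> 0" for t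
  proof -
    note st = sol[OF t]
    have "pos_def \<kappa> (V t)" unfolding V_def
      by (rule pd_M[OF k]) (use st in auto)
    moreover have "in_scrM \<kappa> (V t)" unfolding in_scrM_def V_def mat_eq_on_def by blast
    ultimately show ?thesis by (simp add: in_scrM_pos_def)
  qed
  have UN: "mat_eq_on \<kappa> (W t) (V t)" if W: "is_global_solution \<kappa> \<alpha> \<beta> \<Sigma> W" and t: "t \<ge> 0" for W t
  proof -
    note pV = sol_props[OF k VG] and pW = sol_props[OF k W]
    have W0: "mat_eq_on \<kappa> (W 0) \<Sigma>" "mat_eq_on \<kappa> (V 0) \<Sigma>" using W VG by (auto simp: is_global_solution_def)
    have k12: "0 \<le> \<kappa>" "1 \<le> \<kappa>" "2 \<le> \<kappa>" using k by auto
    have i0: "W 0 0 0 = V 0 0 0" "W 0 0 1 = V 0 0 1" "W 0 1 2 = V 0 1 2"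
      using W0 k12 unfolding mat_eq_on_def by (metis)+
    have eq: "V t 0 0 + V t 0 1 = W t 0 0 + W t 0 1 \<and> V t 0 0 - V t 0 1 = W t 0 0 - W t 0 1 \<and> V t 0 0 - V t 1 2 = W t 0 0 - W t 1 2"
    proof (rule uniq_core[where m="mm \<kappa> \<beta>" and \<alpha>=\<alpha> and \<beta>=\<beta>
        and PA="\<lambda>s. V s 0 0 + V s 0 1" and MA="\<lambda>s. V s 0 0 - V s 0 1" and EA="\<lambda>s. V s 0 0 - V s 1 2"
        and PB="\<lambda>s. W s 0 0 + W s 0 1" and MB="\<lambda>s. W s 0 0 - W s 0 1" and EB="\<lambda>s. W s 0 0 - W s 1 2"
        and PA'="\<lambda>s. matF \<kappa> \<alpha> \<beta> (V s) 0 0 + matF \<kappa> \<alpha> \<beta> (V s) 0 1"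
        and MA'="\<lambda>s. matF \<kappa> \<alpha> \<beta> (V s) 0 0 - matF \<kappa> \<alpha> \<beta> (V s) 0 1"
        and EA'="\<lambda>s. matF \<kappa> \<alpha> \<beta> (V s) 0 0 - matF \<kappa> \<alpha> \<beta> (V s) 1 2"
        and PB'="\<lambda>s. matF \<kappa> \<alpha> \<beta> (W s) 0 0 + matF \<kappa> \<alpha> \<beta> (W s) 0 1"
        and MB'="\<lambda>s. matF \<kappa> \<alpha> \<beta> (W s) 0 0 - matF \<kappa> \<alpha> \<beta> (W s) 0 1"
        and EB'="\<lambda>s. matF \<kappa> \<alpha> \<beta> (W s) 0 0 - matF \<kappa> \<alpha> \<beta> (W s) 1 2"])
      show "t \<ge> 0" by (rule t)
      show "V 0 0 0 + V 0 0 1 = W 0 0 0 + W 0 0 1" "V 0 0 0 - V 0 0 1 = W 0 0 0 - W 0 0 1"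
        "V 0 0 0 - V 0 1 2 = W 0 0 0 - W 0 1 2" using i0 by simp_all
      show "V s 0 0 + V s 0 1 > 0 \<and> V s 0 0 - V s 0 1 > 0" if "s \<ge> 0" for s
        using sol[OF that] by (simp add: Vent Vent')
    qed (use pV pW in blast)+
    have eqs: "W t 0 0 = a t" "W t 0 1 = b t" "W t 1 2 = c t" using eq by (simp_all add: Vent Vent')
    have sc: "in_scrM \<kappa> (W t)" using W t unfolding is_global_solution_def by blast
    show ?thesis using scrM_abc[OF k sc] unfolding eqs by (simp add: V_def)
  qed
  show ?thesis using VG UN PD by blast
qed

end
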